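(* Let $0<\alpha<2$, $0<|\rho_1|,|\rho_2|<1$, and let $(\boldsymbol{\varepsilon}_t)_{t\in\mathbb{Z}}=((\varepsilon_{1,t},\varepsilon_{2,t}))_t$ be i.i.d. symmetric $\alpha$-stable random vectors in $\mathbb{R}^2$ with spectral measure $\Gamma_2$ on the Euclidean unit circle $S_2$ and zero shift. Let $X_{1,t}=\sum_{k\ge0}\rho_1^k\varepsilon_{1,t+k}$ and $X_{2,t}=\sum_{k\ge0}\rho_2^k\varepsilon_{2,t-k}$ (the stationary solutions of $X_{1,t}=\rho_1X_{1,t+1}+\varepsilon_{1,t}$ and $X_{2,t}=\rho_2X_{2,t-1}+\varepsilon_{2,t}$), and $\underline{\boldsymbol{X}}_t=(X_{1,t},X_{2,t},X_{1,t+1},X_{2,t+1})$. Let $\|\cdot\|$ be the seminorm on $\mathbb{R}^4$ given by $\|(x_1,x_2,x_3,x_4)\|=\sqrt{x_1^2+x_2^2}$, with unit cylinder $C_4^{\|\cdot\|}$. Then $\underline{\boldsymbol{X}}_t$ is S$\alpha$S, and it is representable on $C_4^{\|\cdot\|}$ if and only if $\Gamma_2(\{(0,-1),(0,1)\})=0$.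
   Context: An S$\alpha$S vector $\boldsymbol{\varepsilon}$ in $\mathbb{R}^2$ with spectral measure $\Gamma_2$ (a finite symmetric measure on $S_2=\{s\in\mathbb{R}^2:\|s\|_e=1\}$) has characteristic function $\mathbb{E}e^{i\langle u,\boldsymbol{\varepsilon}\rangle}=\exp\{-\int_{S_2}|\langle u,s\rangle|^\alpha\Gamma_2(ds)\}$. $C_4^{\|\cdot\|}=\{s\in\mathbb{R}^4:\|s\|=1\}$. An S$\alpha$S vector $X$ in $\mathbb{R}^d$ is representable on $C_d^{\|\cdot\|}$ if there is a symmetric Borel measure $\Gamma^{\|\cdot\|}$ on $C_d^{\|\cdot\|}$ with $\int|\langle u,s\rangle|^\alpha\Gamma^{\|\cdot\|}(ds)<\infty$ for all $u$ and $\mathbb{E}e^{i\langle u,X\rangle}=\exp\{-\int_{C_d^{\|\cdot\|}}|\langle u,s\rangle|^\alpha\Gamma^{\|\cdot\|}(ds)\}$ for all $u\in\mathbb{R}^d$. *)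

theory Defs
  imports "HOL-Probability.Probability"
begin

definition char_fun_vec :: "'a measure \<Rightarrow> ('a \<Rightarrow> 'b::euclidean_space) \<Rightarrow> 'b \<Rightarrow> complex" where
  "char_fun_vec M X u = integral\<^sup>L M (\<lambda>\<omega>. cis (inner u (X \<omega>)))"

definition sym_borel_measure_on :: "'b::euclidean_space set \<Rightarrow> 'b measure \<Rightarrow> bool" where
  "sym_borel_measure_on C \<Gamma> \<longleftrightarrow>
     sets \<Gamma> = sets borel \<and> C \<in> sets borel \<and> emeasure \<Gamma> (- C) = 0 \<and>
     (\<forall>A\<in>sets borel. emeasure \<Gamma> (uminus ` A) = emeasure \<Gamma> A)"

definition represents_on ::
  "'b::euclidean_space set \<Rightarrow> real \<Rightarrow> 'b measure \<Rightarrow> 'a measure \<Rightarrow> ('a \<Rightarrow> 'b) \<Rightarrow> bool" where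
  "represents_on C \<alpha> \<Gamma> M X \<longleftrightarrow>
     X \<in> borel_measurable M \<and> sym_borel_measure_on C \<Gamma> \<and>
     (\<forall>u. (\<integral>\<^sup>+ s. ennreal (\<bar>inner u s\<bar> powr \<alpha>) \<partial>\<Gamma>) < \<infinity>) \<and>
     (\<forall>u. char_fun_vec M X u =
            complex_of_real (exp (- enn2real (\<integral>\<^sup>+ s. ennreal (\<bar>inner u s\<bar> powr \<alpha>) \<partial>\<Gamma>))))"

definition SaS_spectral :: "real \<Rightarrow> 'b::euclidean_space measure \<Rightarrow> 'a measure \<Rightarrow> ('a \<Rightarrow> 'b) \<Rightarrow> bool" where
  "SaS_spectral \<alpha> \<Gamma> M X \<longleftrightarrow> finite_measure \<Gamma> \<and> represents_on (sphere 0 1) \<alpha> \<Gamma> M X"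

definition SaS :: "real \<Rightarrow> 'a measure \<Rightarrow> ('a \<Rightarrow> 'b::euclidean_space) \<Rightarrow> bool" where
  "SaS \<alpha> M X \<longleftrightarrow> (\<exists>\<Gamma>. SaS_spectral \<alpha> \<Gamma> M X)"

definition representable_on :: "'b::euclidean_space set \<Rightarrow> real \<Rightarrow> 'a measure \<Rightarrow> ('a \<Rightarrow> 'b) \<Rightarrow> bool" where
  "representable_on C \<alpha> M X \<longleftrightarrow> (\<exists>\<Gamma>. represents_on C \<alpha> \<Gamma> M X)"

definition seminorm12 :: "real^4 \<Rightarrow> real" where
  "seminorm12 x = sqrt ((x $ 1)\<^sup>2 + (x $ 2)\<^sup>2)"

definition cyl4 :: "(real^4) set" where
  "cyl4 = {x. seminorm12 x = 1}"

definition X1_proc :: "real \<Rightarrow> (int \<Rightarrow> 'a \<Rightarrow> real^2) \<Rightarrow> int \<Rightarrow> 'a \<Rightarrow> real" where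
  "X1_proc \<rho> \<epsilon> t \<omega> = (\<Sum>k. \<rho> ^ k * (\<epsilon> (t + int k) \<omega> $ 1))"

definition X2_proc :: "real \<Rightarrow> (int \<Rightarrow> 'a \<Rightarrow> real^2) \<Rightarrow> int \<Rightarrow> 'a \<Rightarrow> real" where
  "X2_proc \<rho> \<epsilon> t \<omega> = (\<Sum>k. \<rho> ^ k * (\<epsilon> (t - int k) \<omega> $ 2))"

end

theory Submission
  imports Defs
begin

definition sdiff :: "real \<Rightarrow> real \<Rightarrow> real \<Rightarrow> real" where
  "sdiff \<alpha> a b = \<bar>a + b\<bar> powr \<alpha> + \<bar>a - b\<bar> powr \<alpha> - 2 * \<bar>a\<bar> powr \<alpha>"

lemma sdiff_mvt:
  fixes a b \<alpha> :: real assumes "0 < \<alpha>" "\<alpha> < 2" "0 < b" "2 * b < a"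
  shows "\<bar>(a + b) powr \<alpha> + (a - b) powr \<alpha> - 2 * a powr \<alpha>\<bar> \<le> 2 * \<alpha> * \<bar>\<alpha> - 1\<bar> * b\<^sup>2 * (a/2) powr (\<alpha> - 2)"
proof -
  define h where "h y = (a + y) powr \<alpha> + (a - y) powr \<alpha>" for y
  define h' where "h' y = \<alpha> * (a + y) powr (\<alpha> - 1) - \<alpha> * (a - y) powr (\<alpha> - 1)" for y
  have "DERIV h y :> h' y" if "0 \<le> y" "y \<le> b" for y
  proof -
    have p1: "a + y > 0" "a - y > 0" using that assms by auto
    show ?thesis unfolding h_def h'_def
      using p1 that assms by (auto intro!: derivative_eq_intros)
  qed
  from MVT2[OF \<open>0 < b\<close> this] obtain \<xi> where xi: "0 < \<xi>" "\<xi> < b" "h b - h 0 = (b - 0) * h' \<xi>"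
    by auto
  define g where "g x = \<alpha> * x powr (\<alpha> - 1)" for x
  define g' where "g' x = \<alpha> * ((\<alpha> - 1) * x powr (\<alpha> - 1 - 1))" for x
  have "DERIV g x :> g' x" if "a - \<xi> \<le> x" "x \<le> a + \<xi>" for x
  proof -
    have "x > 0" using that xi assms by auto
    then show ?thesis unfolding g_def g'_def
      by (auto intro!: derivative_eq_intros)
  qed
  have "a - \<xi> < a + \<xi>" using xi by auto
  from MVT2[OF this] \<open>\<And>x. _ \<Longrightarrow> _ \<Longrightarrow> DERIV g x :> g' x\<close> obtain \<eta> where eta: "a - \<xi> < \<eta>" "\<eta> < a + \<xi>" "g (a + \<xi>) - g (a - \<xi>) = (a + \<xi> - (a - \<xi>)) * g' \<eta>"
    by blast
  have hxi: "h' \<xi> = 2 * \<xi> * g' \<eta>" using eta unfolding h'_def g_def by simp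
  have eta_pos: "a / 2 \<le> \<eta>" using eta xi assms by auto
  have "\<eta> powr (\<alpha> - 2) \<le> (a/2) powr (\<alpha> - 2)"
    by (rule powr_mono2') (use assms eta_pos in auto)
  then have gb: "\<bar>g' \<eta>\<bar> \<le> \<alpha> * \<bar>\<alpha> - 1\<bar> * (a/2) powr (\<alpha> - 2)"
    unfolding g'_def using assms by (auto simp: abs_mult intro!: mult_left_mono)
  have "\<bar>(a + b) powr \<alpha> + (a - b) powr \<alpha> - 2 * a powr \<alpha>\<bar> = \<bar>h b - h 0\<bar>"
    unfolding h_def by simp
  also have "\<dots> = b * (2 * \<xi> * \<bar>g' \<eta>\<bar>)" using xi hxi by (simp add: abs_mult)
  also have "\<dots> \<le> b * (2 * b * (\<alpha> * \<bar>\<alpha> - 1\<bar> * (a/2) powr (\<alpha> - 2)))"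
    using xi assms gb by (intro mult_left_mono mult_mono) auto
  finally show ?thesis by (simp add: power2_eq_square algebra_simps)
qed

lemma sdiff_abs: "sdiff \<alpha> a b = sdiff \<alpha> \<bar>a\<bar> \<bar>b\<bar>"
proof -
  have "(\<bar>a+b\<bar> = \<bar>a\<bar>+\<bar>b\<bar> \<and> \<bar>a-b\<bar> = \<bar>\<bar>a\<bar>-\<bar>b\<bar>\<bar>) \<or> (\<bar>a-b\<bar> = \<bar>a\<bar>+\<bar>b\<bar> \<and> \<bar>a+b\<bar> = \<bar>\<bar>a\<bar>-\<bar>b\<bar>\<bar>)"
    by arith
  then show ?thesis unfolding sdiff_def by auto
qed

lemma sdiff_pos_case:
  fixes a b \<alpha> :: real assumes "0 < \<alpha>" "\<alpha> < 2" "0 \<le> b" "2 * b < a"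
  shows "\<bar>sdiff \<alpha> a b\<bar> \<le> 2 * \<alpha> * \<bar>\<alpha> - 1\<bar> * b\<^sup>2 * (a/2) powr (\<alpha> - 2)"
proof (cases "b = 0")
  case True then show ?thesis by (simp add: sdiff_def)
next
  case False
  then have "0 < b" using assms by auto
  from sdiff_mvt[OF assms(1,2) this assms(4)] show ?thesis
    unfolding sdiff_def using assms by simp
qed

lemma sdiff_bound:
  fixes a b \<alpha> :: real assumes "0 < \<alpha>" "\<alpha> < 2"
  shows "\<bar>sdiff \<alpha> a b\<bar> \<le> (4 * 3 powr \<alpha> + 2 * \<alpha> * \<bar>\<alpha> - 1\<bar>) * \<bar>b\<bar> powr \<alpha>"
proof -
  define A B where "A = \<bar>a\<bar>" and "B = \<bar>b\<bar>"
  have AB: "0 \<le> A" "0 \<le> B" unfolding A_def B_def by auto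
  have K: "0 \<le> 2 * \<alpha> * \<bar>\<alpha> - 1\<bar>" "0 \<le> 4 * 3 powr \<alpha>" using assms by auto
  have "\<bar>sdiff \<alpha> A B\<bar> \<le> (4 * 3 powr \<alpha> + 2 * \<alpha> * \<bar>\<alpha> - 1\<bar>) * B powr \<alpha>"
  proof (cases "2 * B < A")
    case True
    show ?thesis
    proof (cases "B = 0")
      case True then show ?thesis by (simp add: sdiff_def)
    next
      case False
      then have Bp: "0 < B" using AB by auto
      have "(A/2) powr (\<alpha> - 2) \<le> B powr (\<alpha> - 2)"
        by (rule powr_mono2') (use assms Bp True in auto)
      then have "B\<^sup>2 * (A/2) powr (\<alpha> - 2) \<le> B\<^sup>2 * B powr (\<alpha> - 2)"
        by (intro mult_left_mono) auto
      also have "\<dots> = B powr \<alpha>"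
      proof -
        have "B powr \<alpha> = B powr 2 * B powr (\<alpha> - 2)" using powr_add[of B 2 "\<alpha> - 2"] by simp
        then show ?thesis using Bp by (simp add: powr_numeral)
      qed
      finally have *: "B\<^sup>2 * (A/2) powr (\<alpha> - 2) \<le> B powr \<alpha>" .
      have "\<bar>sdiff \<alpha> A B\<bar> \<le> 2 * \<alpha> * \<bar>\<alpha> - 1\<bar> * B\<^sup>2 * (A/2) powr (\<alpha> - 2)"
        by (rule sdiff_pos_case) (use assms AB True in auto)
      also have "\<dots> \<le> 2 * \<alpha> * \<bar>\<alpha> - 1\<bar> * B powr \<alpha>"
        using mult_left_mono[OF * K(1)] by (simp add: mult.assoc)
      also have "\<dots> \<le> (4 * 3 powr \<alpha> + 2 * \<alpha> * \<bar>\<alpha> - 1\<bar>) * B powr \<alpha>"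
        using K by (intro mult_right_mono) auto
      finally show ?thesis .
    qed
  next
    case False
    have b1: "\<bar>A + B\<bar> powr \<alpha> \<le> (3 * B) powr \<alpha>" using False AB assms by (intro powr_mono2) auto
    have b2: "\<bar>A - B\<bar> powr \<alpha> \<le> (3 * B) powr \<alpha>" using False AB assms by (intro powr_mono2) auto
    have b3: "\<bar>A\<bar> powr \<alpha> \<le> (3 * B) powr \<alpha>" using False AB assms by (intro powr_mono2) auto
    have "\<bar>sdiff \<alpha> A B\<bar> \<le> 4 * (3 * B) powr \<alpha>"
      unfolding sdiff_def using b1 b2 b3 powr_ge_zero[of "\<bar>A + B\<bar>" \<alpha>] powr_ge_zero[of "\<bar>A - B\<bar>" \<alpha>] powr_ge_zero[of "\<bar>A\<bar>" \<alpha>] by linarith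
    also have "\<dots> = 4 * 3 powr \<alpha> * B powr \<alpha>" using AB by (simp add: powr_mult)
    also have "\<dots> \<le> (4 * 3 powr \<alpha> + 2 * \<alpha> * \<bar>\<alpha> - 1\<bar>) * B powr \<alpha>"
      using K by (intro mult_right_mono) auto
    finally show ?thesis .
  qed
  then show ?thesis using sdiff_abs[of \<alpha> a b] unfolding A_def B_def by simp
qed

lemma sdiff_lim:
  fixes a b \<alpha> :: real assumes "0 < \<alpha>" "\<alpha> < 2" "a \<noteq> 0"
  shows "(\<lambda>n::nat. sdiff \<alpha> (real n * a) b) \<longlonglongrightarrow> 0"
proof (rule Lim_null_comparison)
  have "eventually (\<lambda>n::nat. 2 * \<bar>b\<bar> < real n * \<bar>a\<bar>) sequentially"
  proof -
    obtain N :: nat where "2 * \<bar>b\<bar> / \<bar>a\<bar> < N" using reals_Archimedean2 by blast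
    then have "2 * \<bar>b\<bar> < real n * \<bar>a\<bar>" if "N \<le> n" for n
      using that assms by (auto simp: field_simps intro: less_le_trans mult_right_mono)
    then show ?thesis unfolding eventually_sequentially by blast
  qed
  then show "eventually (\<lambda>n. norm (sdiff \<alpha> (real n * a) b) \<le>
      2 * \<alpha> * \<bar>\<alpha> - 1\<bar> * \<bar>b\<bar>\<^sup>2 * ((real n * \<bar>a\<bar>)/2) powr (\<alpha> - 2)) sequentially"
  proof (rule eventually_mono)
    fix n :: nat assume "2 * \<bar>b\<bar> < real n * \<bar>a\<bar>"
    then have "\<bar>sdiff \<alpha> \<bar>real n * a\<bar> \<bar>b\<bar>\<bar> \<le> 2 * \<alpha> * \<bar>\<alpha> - 1\<bar> * \<bar>b\<bar>\<^sup>2 * (\<bar>real n * a\<bar>/2) powr (\<alpha> - 2)"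
      by (intro sdiff_pos_case) (use assms in \<open>auto simp: abs_mult\<close>)
    then show "norm (sdiff \<alpha> (real n * a) b) \<le> 2 * \<alpha> * \<bar>\<alpha> - 1\<bar> * \<bar>b\<bar>\<^sup>2 * ((real n * \<bar>a\<bar>)/2) powr (\<alpha> - 2)"
      using sdiff_abs[of \<alpha> "real n * a" b] by (simp add: abs_mult)
  qed
  have "LIM n sequentially. real n * (\<bar>a\<bar>/2) :> at_top"
    by (rule filterlim_at_top_mult_tendsto_pos[OF tendsto_const]) (use assms in \<open>auto intro: filterlim_real_sequentially\<close>)
  then have "(\<lambda>n::nat. (real n * (\<bar>a\<bar>/2)) powr (\<alpha> - 2)) \<longlonglongrightarrow> 0"
    by (rule tendsto_neg_powr[rotated]) (use assms in auto)
  then have "(\<lambda>n::nat. ((real n * \<bar>a\<bar>)/2) powr (\<alpha> - 2)) \<longlonglongrightarrow> 0" by simp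
  then show "(\<lambda>n::nat. 2 * \<alpha> * \<bar>\<alpha> - 1\<bar> * \<bar>b\<bar>\<^sup>2 * ((real n * \<bar>a\<bar>)/2) powr (\<alpha> - 2)) \<longlonglongrightarrow> 0"
    by (auto intro: tendsto_mult_right_zero)
qed


definition Jint :: "real \<Rightarrow> 'b::euclidean_space set \<Rightarrow> 'b measure \<Rightarrow> 'b \<Rightarrow> ennreal" where
  "Jint \<alpha> S \<mu> u = (\<integral>\<^sup>+ x. ennreal (indicator S x * \<bar>inner u x\<bar> powr \<alpha>) \<partial>\<mu>)"

lemma Jint_integrable:
  fixes \<mu> :: "'b::euclidean_space measure"
  assumes "sets \<mu> = sets borel" "S \<in> sets borel" "Jint \<alpha> S \<mu> u < \<infinity>"
  shows "integrable \<mu> (\<lambda>x. indicator S x * \<bar>inner u x\<bar> powr \<alpha>)"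
proof (rule integrableI_nonneg)
  show "(\<lambda>x. indicator S x * \<bar>inner u x\<bar> powr \<alpha>) \<in> borel_measurable \<mu>"
    using assms by (simp add: measurable_cong_sets[OF assms(1) refl])
  show "AE x in \<mu>. 0 \<le> indicator S x * \<bar>inner u x\<bar> powr \<alpha>" by auto
  show "(\<integral>\<^sup>+ x. ennreal (indicator S x * \<bar>inner u x\<bar> powr \<alpha>) \<partial>\<mu>) < \<infinity>"
    using assms(3) unfolding Jint_def .
qed

lemma Jint_lim:
  fixes \<mu> :: "'b::euclidean_space measure"
  assumes sets: "sets \<mu> = sets borel" and S: "S \<in> sets borel" and fin: "\<And>u. Jint \<alpha> S \<mu> u < \<infinity>"
    and \<alpha>: "0 < \<alpha>" "\<alpha> < 2"
  defines "R \<equiv> (\<lambda>u. enn2real (Jint \<alpha> S \<mu> u))"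
  shows "(\<lambda>n::nat. R (real n *\<^sub>R v + w) + R (real n *\<^sub>R v - w) - 2 * R (real n *\<^sub>R v))
          \<longlonglongrightarrow> 2 * enn2real (Jint \<alpha> (S \<inter> {x. inner v x = 0}) \<mu> w)"
proof -
  have meas[measurable]: "\<And>u. (\<lambda>x. indicator S x * \<bar>inner u x\<bar> powr \<alpha>) \<in> borel_measurable \<mu>"
    using S by (simp add: measurable_cong_sets[OF sets refl])
  have S': "S \<in> sets \<mu>" using S sets by simp
  have Rint: "R u = (\<integral>x. indicator S x * \<bar>inner u x\<bar> powr \<alpha> \<partial>\<mu>)" for u
    unfolding R_def Jint_def by (rule integral_eq_nn_integral[symmetric]) auto
  have int: "integrable \<mu> (\<lambda>x. indicator S x * \<bar>inner u x\<bar> powr \<alpha>)" for u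
    using Jint_integrable[OF sets S fin] .
  define K where "K = 4 * 3 powr \<alpha> + 2 * \<alpha> * \<bar>\<alpha> - 1\<bar>"
  have seq: "R (real n *\<^sub>R v + w) + R (real n *\<^sub>R v - w) - 2 * R (real n *\<^sub>R v) =
     (\<integral>x. indicator S x * sdiff \<alpha> (real n * inner v x) (inner w x) \<partial>\<mu>)" for n
  proof -
    have "R (real n *\<^sub>R v + w) + R (real n *\<^sub>R v - w) - 2 * R (real n *\<^sub>R v) =
       (\<integral>x. indicator S x * \<bar>inner (real n *\<^sub>R v + w) x\<bar> powr \<alpha> + indicator S x * \<bar>inner (real n *\<^sub>R v - w) x\<bar> powr \<alpha>
          - 2 * (indicator S x * \<bar>inner (real n *\<^sub>R v) x\<bar> powr \<alpha>) \<partial>\<mu>)"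
      (is "_ = (\<integral>x. ?f1 x + ?f2 x - 2 * ?f3 x \<partial>\<mu>)")
    proof -
      have i1: "integrable \<mu> ?f1" "integrable \<mu> ?f2" "integrable \<mu> ?f3" by (rule int)+
      have "(\<integral>x. ?f1 x + ?f2 x - 2 * ?f3 x \<partial>\<mu>) = (\<integral>x. ?f1 x + ?f2 x \<partial>\<mu>) - (\<integral>x. 2 * ?f3 x \<partial>\<mu>)"
        by (rule Bochner_Integration.integral_diff) (use i1 in auto)
      also have "(\<integral>x. ?f1 x + ?f2 x \<partial>\<mu>) = (\<integral>x. ?f1 x \<partial>\<mu>) + (\<integral>x. ?f2 x \<partial>\<mu>)"
        by (rule Bochner_Integration.integral_add) (use i1 in auto)
      also have "(\<integral>x. 2 * ?f3 x \<partial>\<mu>) = 2 * (\<integral>x. ?f3 x \<partial>\<mu>)"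
        by simp
      finally show ?thesis unfolding Rint by simp
    qed
    also have "\<dots> = (\<integral>x. indicator S x * sdiff \<alpha> (real n * inner v x) (inner w x) \<partial>\<mu>)"
      by (rule Bochner_Integration.integral_cong) (auto simp: sdiff_def inner_add_left inner_diff_left algebra_simps)
    finally show ?thesis .
  qed
  have lim: "(\<lambda>n. \<integral>x. indicator S x * sdiff \<alpha> (real n * inner v x) (inner w x) \<partial>\<mu>) \<longlonglongrightarrow>
     (\<integral>x. 2 * (indicator (S \<inter> {x. inner v x = 0}) x * \<bar>inner w x\<bar> powr \<alpha>) \<partial>\<mu>)"
  proof (rule integral_dominated_convergence[where w = "\<lambda>x. K * (indicator S x * \<bar>inner w x\<bar> powr \<alpha>)"])
    show "(\<lambda>x. 2 * (indicator (S \<inter> {x. inner v x = 0}) x * \<bar>inner w x\<bar> powr \<alpha>)) \<in> borel_measurable \<mu>"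
      using S by (simp add: measurable_cong_sets[OF sets refl])
    show "(\<lambda>x. indicator S x * sdiff \<alpha> (real n * inner v x) (inner w x)) \<in> borel_measurable \<mu>" for n
      using S by (simp add: measurable_cong_sets[OF sets refl] sdiff_def)
    show "integrable \<mu> (\<lambda>x. K * (indicator S x * \<bar>inner w x\<bar> powr \<alpha>))"
      using int by simp
    show "AE x in \<mu>. (\<lambda>n. indicator S x * sdiff \<alpha> (real n * inner v x) (inner w x)) \<longlonglongrightarrow>
       2 * (indicator (S \<inter> {x. inner v x = 0}) x * \<bar>inner w x\<bar> powr \<alpha>)"
    proof (rule AE_I2)
      fix x
      show "(\<lambda>n. indicator S x * sdiff \<alpha> (real n * inner v x) (inner w x)) \<longlonglongrightarrow>
       2 * (indicator (S \<inter> {x. inner v x = 0}) x * \<bar>inner w x\<bar> powr \<alpha>)"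
      proof (cases "inner v x = 0")
        case True
        then show ?thesis by (simp add: sdiff_def indicator_def)
      next
        case False
        have "(\<lambda>n. indicator S x * sdiff \<alpha> (real n * inner v x) (inner w x)) \<longlonglongrightarrow> indicator S x * 0"
          by (intro tendsto_mult tendsto_const sdiff_lim \<alpha> False)
        then show ?thesis using False by (simp add: indicator_def)
      qed
    qed
    show "AE x in \<mu>. norm (indicator S x * sdiff \<alpha> (real n * inner v x) (inner w x)) \<le> K * (indicator S x * \<bar>inner w x\<bar> powr \<alpha>)" for n
    proof (rule AE_I2)
      fix x
      show "norm (indicator S x * sdiff \<alpha> (real n * inner v x) (inner w x)) \<le> K * (indicator S x * \<bar>inner w x\<bar> powr \<alpha>)"
        using sdiff_bound[OF \<alpha>, of "real n * inner v x" "inner w x"]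
        by (auto simp: indicator_def K_def)
    qed
  qed
  have "(\<integral>x. 2 * (indicator (S \<inter> {x. inner v x = 0}) x * \<bar>inner w x\<bar> powr \<alpha>) \<partial>\<mu>) =
        2 * enn2real (Jint \<alpha> (S \<inter> {x. inner v x = 0}) \<mu> w)"
    unfolding Jint_def
    by (subst integral_eq_nn_integral[symmetric]) (use S sets in \<open>auto simp: measurable_cong_sets[OF sets refl]\<close>)
  with lim seq show ?thesis by simp
qed

lemma Jint_uniq_step:
  fixes \<mu> \<nu> :: "'b::euclidean_space measure"
  assumes sets: "sets \<mu> = sets borel" "sets \<nu> = sets borel" and S: "S \<in> sets borel"
    and fin: "\<And>u. Jint \<alpha> S \<mu> u < \<infinity>" "\<And>u. Jint \<alpha> S \<nu> u < \<infinity>"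
    and eq: "\<And>u. Jint \<alpha> S \<mu> u = Jint \<alpha> S \<nu> u"
    and \<alpha>: "0 < \<alpha>" "\<alpha> < 2"
  shows "Jint \<alpha> (S \<inter> {x. inner v x = 0}) \<mu> w = Jint \<alpha> (S \<inter> {x. inner v x = 0}) \<nu> w"
proof -
  note l1 = Jint_lim[OF sets(1) S fin(1) \<alpha>, of v w]
  note l2 = Jint_lim[OF sets(2) S fin(2) \<alpha>, of v w]
  from LIMSEQ_unique[OF l1 l2[folded eq]]
  have "enn2real (Jint \<alpha> (S \<inter> {x. inner v x = 0}) \<mu> w) = enn2real (Jint \<alpha> (S \<inter> {x. inner v x = 0}) \<nu> w)"
    by simp
  moreover have "Jint \<alpha> (S \<inter> {x. inner v x = 0}) \<mu> w \<le> Jint \<alpha> S \<mu> w"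
    "Jint \<alpha> (S \<inter> {x. inner v x = 0}) \<nu> w \<le> Jint \<alpha> S \<nu> w"
    unfolding Jint_def by (auto intro!: nn_integral_mono simp: indicator_def)
  moreover have "Jint \<alpha> (S \<inter> {x. inner v x = 0}) \<mu> w \<noteq> \<top>" "Jint \<alpha> (S \<inter> {x. inner v x = 0}) \<nu> w \<noteq> \<top>"
    using order.strict_trans1[OF calculation(2) fin(1)[of w]] order.strict_trans1[OF calculation(3) fin(2)[of w]] by auto
  ultimately show ?thesis
    by (metis ennreal_enn2real less_top)
qed


definition symm :: "'b::euclidean_space measure \<Rightarrow> bool" where
  "symm \<mu> \<longleftrightarrow> (\<forall>h::'b \<Rightarrow> ennreal. h \<in> borel_measurable borel \<longrightarrow> (\<integral>\<^sup>+ x. h (- x) \<partial>\<mu>) = (\<integral>\<^sup>+ x. h x \<partial>\<mu>))"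

lemma uminus_image_eq_vimage: "uminus ` (A::'b::ab_group_add set) = uminus -` A"
  by (auto simp: image_iff) (metis minus_minus)

lemma symm_from_sets:
  fixes \<mu> :: "'b::euclidean_space measure"
  assumes sets: "sets \<mu> = sets borel" and sym: "\<forall>A\<in>sets borel. emeasure \<mu> (uminus ` A) = emeasure \<mu> A"
  shows "symm \<mu>"
proof -
  have "distr \<mu> borel uminus = \<mu>"
  proof (rule measure_eqI)
    show "sets (distr \<mu> borel uminus) = sets \<mu>" using sets by simp
    fix A assume "A \<in> sets (distr \<mu> borel uminus)"
    then have A: "A \<in> sets borel" by simp
    have m: "uminus \<in> measurable \<mu> borel" using sets by (simp add: measurable_cong_sets[OF sets refl])
    have "emeasure (distr \<mu> borel uminus) A = emeasure \<mu> (uminus -` A \<inter> space \<mu>)"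
      by (rule emeasure_distr[OF m A])
    also have "\<dots> = emeasure \<mu> (uminus ` A)"
      using sets_eq_imp_space_eq[OF sets] by (simp add: uminus_image_eq_vimage)
    also have "\<dots> = emeasure \<mu> A" using sym A by auto
    finally show "emeasure (distr \<mu> borel uminus) A = emeasure \<mu> A" .
  qed
  show ?thesis unfolding symm_def
  proof safe
    fix h :: "'b \<Rightarrow> ennreal" assume h[measurable]: "h \<in> borel_measurable borel"
    have m: "uminus \<in> measurable \<mu> borel" using sets by (simp add: measurable_cong_sets[OF sets refl])
    have "(\<integral>\<^sup>+ x. h x \<partial>distr \<mu> borel uminus) = (\<integral>\<^sup>+ x. h (- x) \<partial>\<mu>)"
      by (rule nn_integral_distr[OF m]) simp
    then show "(\<integral>\<^sup>+ x. h (- x) \<partial>\<mu>) = (\<integral>\<^sup>+ x. h x \<partial>\<mu>)"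
      using \<open>distr \<mu> borel uminus = \<mu>\<close> by simp
  qed
qed

lemma sets_from_symm:
  fixes \<mu> :: "'b::euclidean_space measure"
  assumes sets: "sets \<mu> = sets borel" and "symm \<mu>" and A: "A \<in> sets borel"
  shows "emeasure \<mu> (uminus ` A) = emeasure \<mu> A"
proof -
  have A': "uminus ` A \<in> sets borel" unfolding uminus_image_eq_vimage
  proof -
    show "uminus -` A \<in> sets borel" by (rule measurable_sets_borel[OF _ A]) simp
  qed
  have "emeasure \<mu> (uminus ` A) = (\<integral>\<^sup>+ x. indicator (uminus ` A) x \<partial>\<mu>)"
    using A' sets by simp
  also have "\<dots> = (\<integral>\<^sup>+ x. indicator A (- x) \<partial>\<mu>)"
    by (intro nn_integral_cong) (simp add: uminus_image_eq_vimage indicator_def)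
  also have "\<dots> = (\<integral>\<^sup>+ x. indicator A x \<partial>\<mu>)"
  proof -
    have "(\<lambda>x. indicator A x :: ennreal) \<in> borel_measurable borel" using A by simp
    then show ?thesis using assms(2) unfolding symm_def by blast
  qed
  also have "\<dots> = emeasure \<mu> A" using A sets by simp
  finally show ?thesis .
qed

definition Lmeas :: "'c::euclidean_space measure \<Rightarrow> ('i::countable \<Rightarrow> 'c \<Rightarrow> 'b::euclidean_space) \<Rightarrow> 'b measure" where
  "Lmeas G A = distr (count_space UNIV \<Otimes>\<^sub>M G) borel (\<lambda>(m, s). A m s)"

lemma Lmeas_sets: "sets (Lmeas G A) = sets borel" unfolding Lmeas_def by simp

lemma Lmeas_meas:
  fixes A :: "'i::countable \<Rightarrow> 'c::euclidean_space \<Rightarrow> 'b::euclidean_space"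
  assumes sets: "sets G = sets borel" and A: "\<And>m. A m \<in> borel_measurable borel"
  shows "(\<lambda>(m, s). A m s) \<in> measurable (count_space UNIV \<Otimes>\<^sub>M G) borel"
  by (rule measurable_pair_measure_countable1) (use A sets in \<open>auto simp: measurable_cong_sets[OF sets refl]\<close>)

lemma Lmeas_nn_integral:
  fixes G :: "'c::euclidean_space measure"
  assumes sets: "sets G = sets borel" and sf: "sigma_finite_measure G"
    and A: "\<And>m. A m \<in> borel_measurable borel" and h: "h \<in> borel_measurable borel"
  shows "(\<integral>\<^sup>+ x. h x \<partial>Lmeas G A) = (\<integral>\<^sup>+ m. (\<integral>\<^sup>+ s. h (A m s) \<partial>G) \<partial>count_space UNIV)"
proof -
  have m: "(\<lambda>(m, s). A m s) \<in> measurable (count_space UNIV \<Otimes>\<^sub>M G) borel" by (rule Lmeas_meas[OF sets A])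
  have "(\<integral>\<^sup>+ x. h x \<partial>Lmeas G A) = (\<integral>\<^sup>+ x. h ((\<lambda>(m, s). A m s) x) \<partial>(count_space UNIV \<Otimes>\<^sub>M G))"
    unfolding Lmeas_def by (rule nn_integral_distr[OF m]) (use h in simp)
  also have "\<dots> = (\<integral>\<^sup>+ m. (\<integral>\<^sup>+ s. h (A m s) \<partial>G) \<partial>count_space UNIV)"
    using sigma_finite_measure.nn_integral_fst[OF sf, of "\<lambda>(m, s). h (A m s)" "count_space UNIV"] m h
    by (simp add: split_beta')
  finally show ?thesis .
qed

lemma Lmeas_symm:
  fixes G :: "'c::euclidean_space measure"
  assumes sets: "sets G = sets borel" and sf: "sigma_finite_measure G" and sym: "symm G"
    and A: "\<And>m. A m \<in> borel_measurable borel" and Aodd: "\<And>m s. A m (- s) = - A m s"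
  shows "symm (Lmeas G A)"
  unfolding symm_def
proof (intro allI impI)
  fix h :: "'b \<Rightarrow> ennreal" assume h[measurable]: "h \<in> borel_measurable borel"
  have "(\<integral>\<^sup>+ x. h (- x) \<partial>Lmeas G A) = (\<integral>\<^sup>+ m. (\<integral>\<^sup>+ s. h (- A m s) \<partial>G) \<partial>count_space UNIV)"
    by (rule Lmeas_nn_integral[OF sets sf A]) simp
  also have "\<dots> = (\<integral>\<^sup>+ m. (\<integral>\<^sup>+ s. h (A m s) \<partial>G) \<partial>count_space UNIV)"
  proof -
    have "(\<integral>\<^sup>+ s. h (- A m s) \<partial>G) = (\<integral>\<^sup>+ s. h (A m s) \<partial>G)" for m
    proof -
    have hm: "(\<lambda>s. h (A m s)) \<in> borel_measurable borel" using A[of m] by simp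
    have "(\<integral>\<^sup>+ s. h (- A m s) \<partial>G) = (\<integral>\<^sup>+ s. h (A m (- s)) \<partial>G)" by (simp add: Aodd)
    also have "\<dots> = (\<integral>\<^sup>+ s. h (A m s) \<partial>G)"
      using sym hm unfolding symm_def by blast
    finally show "(\<integral>\<^sup>+ s. h (- A m s) \<partial>G) = (\<integral>\<^sup>+ s. h (A m s) \<partial>G)" .
    qed
    then show ?thesis by simp
  qed
  also have "\<dots> = (\<integral>\<^sup>+ x. h x \<partial>Lmeas G A)"
    by (rule Lmeas_nn_integral[OF sets sf A, symmetric]) simp
  finally show "(\<integral>\<^sup>+ x. h (- x) \<partial>Lmeas G A) = (\<integral>\<^sup>+ x. h x \<partial>Lmeas G A)" .
qed

definition Nmeas :: "real \<Rightarrow> ('b::euclidean_space \<Rightarrow> real) \<Rightarrow> 'b measure \<Rightarrow> 'b measure" where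
  "Nmeas \<alpha> N L = distr (density L (\<lambda>x. ennreal (N x powr \<alpha>))) borel (\<lambda>x. x /\<^sub>R N x)"

locale hom_fun =
  fixes N :: "'b::euclidean_space \<Rightarrow> real"
  assumes N_meas[measurable]: "N \<in> borel_measurable borel"
    and N_nonneg: "\<And>x. 0 \<le> N x"
    and N_hom: "\<And>c x. N (c *\<^sub>R x) = \<bar>c\<bar> * N x"
begin

lemma N_uminus: "N (- x) = N x" using N_hom[of "-1" x] by simp

lemma N_norm1: "N x \<noteq> 0 \<Longrightarrow> N (x /\<^sub>R N x) = 1"
  using N_hom[of "inverse (N x)" x] N_nonneg[of x] by simp

lemma Nmeas_sets: "sets (Nmeas \<alpha> N L) = sets borel" unfolding Nmeas_def by simp

lemma Nmeas_nn_integral: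
  assumes sets: "sets L = sets borel" and h: "h \<in> borel_measurable borel"
  shows "(\<integral>\<^sup>+ y. h y \<partial>Nmeas \<alpha> N L) = (\<integral>\<^sup>+ x. ennreal (N x powr \<alpha>) * h (x /\<^sub>R N x) \<partial>L)"
proof -
  have m: "(\<lambda>x. x /\<^sub>R N x) \<in> measurable (density L (\<lambda>x. ennreal (N x powr \<alpha>))) borel"
    by (simp add: measurable_cong_sets[OF sets refl])
  have "(\<integral>\<^sup>+ y. h y \<partial>Nmeas \<alpha> N L) = (\<integral>\<^sup>+ x. h (x /\<^sub>R N x) \<partial>density L (\<lambda>x. ennreal (N x powr \<alpha>)))"
    unfolding Nmeas_def by (rule nn_integral_distr[OF m]) (use h in simp)
  also have "\<dots> = (\<integral>\<^sup>+ x. ennreal (N x powr \<alpha>) * h (x /\<^sub>R N x) \<partial>L)"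
    by (rule nn_integral_density) (use h in \<open>simp_all add: measurable_cong_sets[OF sets refl]\<close>)
  finally show ?thesis .
qed

lemma Nmeas_psi:
  assumes sets: "sets L = sets borel" and \<alpha>: "0 < \<alpha>"
  shows "(\<integral>\<^sup>+ y. ennreal (\<bar>inner u y\<bar> powr \<alpha>) \<partial>Nmeas \<alpha> N L) =
         (\<integral>\<^sup>+ x. ennreal (indicator {x. N x \<noteq> 0} x * \<bar>inner u x\<bar> powr \<alpha>) \<partial>L)"
proof -
  have "(\<integral>\<^sup>+ y. ennreal (\<bar>inner u y\<bar> powr \<alpha>) \<partial>Nmeas \<alpha> N L) =
      (\<integral>\<^sup>+ x. ennreal (N x powr \<alpha>) * ennreal (\<bar>inner u (x /\<^sub>R N x)\<bar> powr \<alpha>) \<partial>L)"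
    by (rule Nmeas_nn_integral[OF sets]) simp
  also have "\<dots> = (\<integral>\<^sup>+ x. ennreal (indicator {x. N x \<noteq> 0} x * \<bar>inner u x\<bar> powr \<alpha>) \<partial>L)"
  proof (intro nn_integral_cong)
    fix x
    show "ennreal (N x powr \<alpha>) * ennreal (\<bar>inner u (x /\<^sub>R N x)\<bar> powr \<alpha>) =
          ennreal (indicator {x. N x \<noteq> 0} x * \<bar>inner u x\<bar> powr \<alpha>)"
    proof (cases "N x = 0")
      case True then show ?thesis by simp
    next
      case False
      then have Np: "0 < N x" using N_nonneg[of x] by simp
      have "N x powr \<alpha> * \<bar>inner u (x /\<^sub>R N x)\<bar> powr \<alpha> = N x powr \<alpha> * (\<bar>inner u x\<bar> / N x) powr \<alpha>"
        using Np by (simp add: inner_scaleR_right abs_mult divide_inverse_commute)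
      also have "\<dots> = \<bar>inner u x\<bar> powr \<alpha>"
        using Np by (simp add: powr_divide)
      finally show ?thesis using False by (simp add: ennreal_mult''[symmetric])
    qed
  qed
  finally show ?thesis .
qed

lemma Nmeas_support:
  assumes sets: "sets L = sets borel"
  shows "emeasure (Nmeas \<alpha> N L) (- {x. N x = 1}) = 0"
proof -
  have C: "- {x. N x = 1} \<in> sets borel" by measurable
  have "emeasure (Nmeas \<alpha> N L) (- {x. N x = 1}) = (\<integral>\<^sup>+ y. indicator (- {x. N x = 1}) y \<partial>Nmeas \<alpha> N L)"
    using C by (simp add: Nmeas_sets)
  also have "\<dots> = (\<integral>\<^sup>+ x. ennreal (N x powr \<alpha>) * indicator (- {x. N x = 1}) (x /\<^sub>R N x) \<partial>L)"
    by (rule Nmeas_nn_integral[OF sets]) (use C in simp)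
  also have "\<dots> = (\<integral>\<^sup>+ x. 0 \<partial>L)"
  proof (intro nn_integral_cong)
    fix x show "ennreal (N x powr \<alpha>) * indicator (- {x. N x = 1}) (x /\<^sub>R N x) = 0"
      by (cases "N x = 0") (auto simp: N_norm1 indicator_def)
  qed
  finally show ?thesis by simp
qed

lemma Nmeas_symm:
  assumes sets: "sets L = sets borel" and sym: "symm L"
  shows "symm (Nmeas \<alpha> N L)"
  unfolding symm_def
proof (intro allI impI)
  fix h :: "'b \<Rightarrow> ennreal" assume h[measurable]: "h \<in> borel_measurable borel"
  have "(\<integral>\<^sup>+ x. h (- x) \<partial>Nmeas \<alpha> N L) = (\<integral>\<^sup>+ x. ennreal (N x powr \<alpha>) * h (- (x /\<^sub>R N x)) \<partial>L)"
    by (rule Nmeas_nn_integral[OF sets]) simp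
  also have "\<dots> = (\<integral>\<^sup>+ x. ennreal (N (- x) powr \<alpha>) * h ((- x) /\<^sub>R N (- x)) \<partial>L)"
    by (simp add: N_uminus)
  also have "\<dots> = (\<integral>\<^sup>+ x. ennreal (N x powr \<alpha>) * h (x /\<^sub>R N x) \<partial>L)"
    using sym unfolding symm_def
    by (rule allE[where x="\<lambda>x. ennreal (N x powr \<alpha>) * h (x /\<^sub>R N x)"]) simp
  also have "\<dots> = (\<integral>\<^sup>+ x. h x \<partial>Nmeas \<alpha> N L)"
    by (rule Nmeas_nn_integral[OF sets, symmetric]) simp
  finally show "(\<integral>\<^sup>+ x. h (- x) \<partial>Nmeas \<alpha> N L) = (\<integral>\<^sup>+ x. h x \<partial>Nmeas \<alpha> N L)" .
qed

lemma Nmeas_total: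
  assumes sets: "sets L = sets borel"
  shows "emeasure (Nmeas \<alpha> N L) UNIV = (\<integral>\<^sup>+ x. ennreal (N x powr \<alpha>) \<partial>L)"
proof -
  have "emeasure (Nmeas \<alpha> N L) UNIV = (\<integral>\<^sup>+ y. 1 \<partial>Nmeas \<alpha> N L)"
    using Nmeas_sets[of \<alpha> L] by (simp add: sets_eq_imp_space_eq)
  also have "\<dots> = (\<integral>\<^sup>+ x. ennreal (N x powr \<alpha>) * 1 \<partial>L)"
    by (rule Nmeas_nn_integral[OF sets]) simp
  finally show ?thesis by simp
qed

end


lemma vector4_nth [simp]:
  "(vector [a,b,c,d] :: ('x::zero)^4) $ 1 = a"
  "(vector [a,b,c,d] :: ('x::zero)^4) $ 2 = b"
  "(vector [a,b,c,d] :: ('x::zero)^4) $ 3 = c"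
  "(vector [a,b,c,d] :: ('x::zero)^4) $ 4 = d"
  unfolding vector_def by simp_all

lemma inner4: "inner (u::real^4) v = u$1 * v$1 + u$2 * v$2 + u$3 * v$3 + u$4 * v$4"
  by (simp add: inner_vec_def sum_4)

lemma inner2: "inner (u::real^2) v = u$1 * v$1 + u$2 * v$2"
  by (simp add: inner_vec_def sum_2)

lemma vector4_eq: "(vector [a,b,c,d] :: real^4) = a *\<^sub>R axis 1 1 + b *\<^sub>R axis 2 1 + c *\<^sub>R axis 3 1 + d *\<^sub>R axis 4 1"
  by (simp add: vec_eq_iff forall_4 axis_def)

lemma vector2_eq: "(vector [a,b] :: real^2) = a *\<^sub>R axis 1 1 + b *\<^sub>R axis 2 1"
  by (simp add: vec_eq_iff forall_2 axis_def)

lemma vector4_meas[measurable]: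
  assumes [measurable]: "f \<in> borel_measurable M" "g \<in> borel_measurable M" "h \<in> borel_measurable M" "k \<in> borel_measurable M"
  shows "(\<lambda>\<omega>. vector [f \<omega>, g \<omega>, h \<omega>, k \<omega>] :: real^4) \<in> borel_measurable M"
  unfolding vector4_eq by measurable

lemma vector2_meas[measurable]:
  assumes [measurable]: "f \<in> borel_measurable M" "g \<in> borel_measurable M"
  shows "(\<lambda>\<omega>. vector [f \<omega>, g \<omega>] :: real^2) \<in> borel_measurable M"
  unfolding vector2_eq by measurable

lemma vec_nth_meas[measurable]: "(\<lambda>x::real^'n. x $ i) \<in> borel_measurable borel"
  by (simp add: cart_eq_inner_axis)

lemma cis_meas[measurable]:
  assumes [measurable]: "f \<in> borel_measurable M"
  shows "(\<lambda>x. cis (f x)) \<in> borel_measurable M"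
  unfolding cis_conv_exp by measurable

locale SaS_setting =
  fixes M :: "'a measure" and \<alpha> \<rho>1 \<rho>2 :: real
    and \<epsilon> :: "int \<Rightarrow> 'a \<Rightarrow> real^2" and \<Gamma>2 :: "(real^2) measure" and t :: int
  assumes PS: "prob_space M"
    and \<alpha>: "0 < \<alpha>" "\<alpha> < 2"
    and \<rho>: "0 < \<bar>\<rho>1\<bar>" "\<bar>\<rho>1\<bar> < 1" "0 < \<bar>\<rho>2\<bar>" "\<bar>\<rho>2\<bar> < 1"
    and meas[measurable]: "\<And>t. \<epsilon> t \<in> borel_measurable M"
    and indep: "prob_space.indep_vars M (\<lambda>_. borel) \<epsilon> UNIV"
    and distr_eq: "\<And>t. distr M borel (\<epsilon> t) = distr M borel (\<epsilon> 0)"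
    and spec: "SaS_spectral \<alpha> \<Gamma>2 M (\<epsilon> 0)"
begin

sublocale prob_space M by (rule PS)

definition psi2 :: "real^2 \<Rightarrow> ennreal" where
  "psi2 v = (\<integral>\<^sup>+ s. ennreal (\<bar>inner v s\<bar> powr \<alpha>) \<partial>\<Gamma>2)"

definition G :: "real^2 \<Rightarrow> real" where "G v = enn2real (psi2 v)"

lemma G_sets: "sets \<Gamma>2 = sets borel"
  and G_finite: "finite_measure \<Gamma>2"
  and G_supp: "emeasure \<Gamma>2 (- sphere 0 1) = 0"
  and G_sym_sets: "\<forall>A\<in>sets borel. emeasure \<Gamma>2 (uminus ` A) = emeasure \<Gamma>2 A"
  and psi2_fin: "psi2 v < \<infinity>"
  and char0: "char_fun_vec M (\<epsilon> 0) v = complex_of_real (exp (- G v))"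
  using spec unfolding SaS_spectral_def represents_on_def sym_borel_measure_on_def psi2_def G_def
  by auto

lemma G_sf: "sigma_finite_measure \<Gamma>2"
  using G_finite by (simp add: finite_measure.axioms(1))

lemma G_symm: "symm \<Gamma>2" by (rule symm_from_sets[OF G_sets G_sym_sets])

lemma G_nonneg: "0 \<le> G v" by (simp add: G_def)

lemma psi2_G: "psi2 v = ennreal (G v)"
  using psi2_fin[of v] by (simp add: G_def ennreal_enn2real less_top)

lemma char_fun_eq_distr:
  fixes X :: "'a \<Rightarrow> 'b::euclidean_space"
  assumes "X \<in> borel_measurable M"
  shows "char_fun_vec M X v = (\<integral>x. cis (inner v x) \<partial>distr M borel X)"
  unfolding char_fun_vec_def by (subst integral_distr[OF assms]) auto

lemma char_eps: "char_fun_vec M (\<epsilon> m) v = complex_of_real (exp (- G v))"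
  using char_fun_eq_distr[OF meas[of m]] char_fun_eq_distr[OF meas[of 0]] distr_eq[of m] char0 by simp

lemma AE_sphere: "AE s in \<Gamma>2. s \<in> sphere 0 1"
proof -
  have "- sphere 0 1 \<in> sets \<Gamma>2" using G_sets by simp
  moreover have "- sphere 0 1 \<in> null_sets \<Gamma>2" using G_supp calculation by (simp add: null_sets_def)
  ultimately show ?thesis using AE_iff_null_sets[of "- sphere 0 1" \<Gamma>2] by simp
qed

lemma char_sum:
  assumes F: "finite F"
  shows "(\<integral>\<omega>. cis (\<Sum>m\<in>F. inner (b m) (\<epsilon> m \<omega>)) \<partial>M) = complex_of_real (exp (- (\<Sum>m\<in>F. G (b m))))"
proof -
  have ind: "indep_vars (\<lambda>_. borel) (\<lambda>m \<omega>. cis (inner (b m) (\<epsilon> m \<omega>))) F"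
    by (rule indep_vars_compose2[OF indep_vars_subset[OF indep]]) auto
  have "(\<integral>\<omega>. cis (\<Sum>m\<in>F. inner (b m) (\<epsilon> m \<omega>)) \<partial>M) = (\<integral>\<omega>. (\<Prod>m\<in>F. cis (inner (b m) (\<epsilon> m \<omega>))) \<partial>M)"
    using F by (simp add: cis_conv_exp sum_distrib_left exp_sum)
  also have "\<dots> = (\<Prod>m\<in>F. (\<integral>\<omega>. cis (inner (b m) (\<epsilon> m \<omega>)) \<partial>M))"
    by (rule indep_vars_lebesgue_integral[OF F ind]) (auto intro!: integrable_const_bound[where B=1])
  also have "\<dots> = (\<Prod>m\<in>F. complex_of_real (exp (- G (b m))))"
    using char_eps unfolding char_fun_vec_def by simp
  also have "\<dots> = complex_of_real (exp (- (\<Sum>m\<in>F. G (b m))))"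
    using F by (simp add: exp_sum sum_negf[symmetric] of_real_prod)
  finally show ?thesis .
qed

end

text \<open>Truncation inequality (adapted from the proof of the Levy continuity theorem).\<close>
lemma (in real_distribution) trunc_ineq:
  assumes "u > 0"
  shows "u * measure M {x. abs x \<ge> 2 / u} \<le> Re (CLBINT t:{-u..u}. 1 - char M t)"
proof -
  have *: "\<And>u x. u > 0 \<Longrightarrow> x \<noteq> 0 \<Longrightarrow> (CLBINT t:{-u..u}. 1 - iexp (t * x)) =
      2 * (u  - sin (u * x) / x)"
  proof -
    fix u :: real and x :: real
    assume "u > 0" and "x \<noteq> 0"
    hence "(CLBINT t:{-u..u}. 1 - iexp (t * x)) = (CLBINT t=-u..u. 1 - iexp (t * x))"
      by (subst interval_integral_Icc, auto)
    also have "\<dots> = (CLBINT t=-u..ereal 0. 1 - iexp (t * x)) + (CLBINT t= ereal 0..u. 1 - iexp (t * x))"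
      using \<open>u > 0\<close>
      by (subst interval_integral_sum; force simp add: interval_integrable_isCont)
    also have "\<dots> = (CLBINT t=ereal 0..u. 1 - iexp (t * -x)) + (CLBINT t=ereal 0..u. 1 - iexp (t * x))"
      by (subst interval_integral_reflect, auto)
    also have "... = CLBINT xa=ereal 0..ereal u. 1 - iexp (xa * - x) + (1 - iexp (xa * x))"
      by (subst interval_lebesgue_integral_add (2) [symmetric]) (auto simp: interval_integrable_isCont)
    also have "\<dots> = (LBINT t=ereal 0..u. 2 - 2 * cos (t * x))"
      unfolding exp_Euler cos_of_real by (simp flip: interval_lebesgue_integral_of_real)
    also have "\<dots> = 2 * u - 2 * sin (u * x) / x"
      by (subst interval_lebesgue_integral_diff)
         (auto intro!: interval_integrable_isCont
               simp: interval_lebesgue_integral_of_real integral_cos [OF \<open>x \<noteq> 0\<close>] mult.commute[of _ x])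
    finally show "(CLBINT t:{-u..u}. 1 - iexp (t * x)) = 2 * (u  - sin (u * x) / x)"
      by (simp add: field_simps)
  qed
  interpret P: pair_sigma_finite "M" lborel ..
  have Mn1 [simp]: "measure M UNIV = 1" by (metis prob_space space_eq_univ)
  have Mn2 [simp]: "\<And>x. complex_integrable M (\<lambda>t. exp (\<i> * complex_of_real (x * t)))"
    by (rule integrable_const_bound [where B = 1], auto)
  have Mn3: "set_integrable (M \<Otimes>\<^sub>M lborel) (UNIV \<times> {- u..u}) (\<lambda>a. 1 - exp (\<i> * complex_of_real (snd a * fst a)))"
    using \<open>0 < u\<close>
    unfolding set_integrable_def
    by (intro integrableI_bounded_set_indicator [where B = "2"])
       (auto simp: lborel.emeasure_pair_measure_Times ennreal_mult_less_top not_less top_unique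
             split: split_indicator
             intro!: order_trans [OF norm_triangle_ineq4])
  have "(CLBINT t:{-u..u}. 1 - char M t) =
      (CLBINT t:{-u..u}. (CLINT x | M. 1 - iexp (t * x)))"
    unfolding char_def by (rule set_lebesgue_integral_cong, auto simp del: of_real_mult)
  also have "\<dots> = (CLBINT t. (CLINT x | M. indicator {-u..u} t *\<^sub>R (1 - iexp (t * x))))"
    unfolding set_lebesgue_integral_def
    by (rule Bochner_Integration.integral_cong) (auto split: split_indicator)
  also have "\<dots> = (CLINT x | M. (CLBINT t:{-u..u}. 1 - iexp (t * x)))"
    using Mn3 by (subst P.Fubini_integral) (auto simp: indicator_times split_beta' set_integrable_def set_lebesgue_integral_def)
  also have "\<dots> = (CLINT x | M. (if x = 0 then 0 else 2 * (u  - sin (u * x) / x)))"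
    using \<open>u > 0\<close> by (intro Bochner_Integration.integral_cong, auto simp add: * simp del: of_real_mult)
  also have "\<dots> = (LINT x | M. (if x = 0 then 0 else 2 * (u  - sin (u * x) / x)))"
    by (rule integral_complex_of_real)
  finally have "Re (CLBINT t:{-u..u}. 1 - char M t) =
     (LINT x | M. (if x = 0 then 0 else 2 * (u  - sin (u * x) / x)))" by simp
  also have "\<dots> \<ge> (LINT x : {x. abs x \<ge> 2 / u} | M. u)"
  proof -
    have "complex_integrable M (\<lambda>x. CLBINT t:{-u..u}. 1 - iexp (snd (x, t) * fst (x, t)))"
      using Mn3 unfolding set_integrable_def set_lebesgue_integral_def
      by (intro P.integrable_fst) (simp add: indicator_times split_beta')
    hence "complex_integrable M (\<lambda>x. if x = 0 then 0 else 2 * (u  - sin (u * x) / x))"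
      using \<open>u > 0\<close>
      unfolding set_integrable_def
      by (subst Bochner_Integration.integrable_cong) (auto simp add: * simp del: of_real_mult)
    hence **: "integrable M (\<lambda>x. if x = 0 then 0 else 2 * (u  - sin (u * x) / x))"
      unfolding complex_of_real_integrable_eq .
    have "2 * sin x \<le> x" if "2 \<le> x" for x :: real
      by (rule order_trans[OF _ \<open>2 \<le> x\<close>]) auto
    moreover have "x \<le> 2 * sin x" if "x \<le> - 2" for x :: real
      by (rule order_trans[OF \<open>x \<le> - 2\<close>]) auto
    moreover have "x < 0 \<Longrightarrow> x \<le> sin x" for x :: real
      using sin_x_le_x[of "-x"] by simp
    ultimately show ?thesis
      using \<open>u > 0\<close> unfolding set_lebesgue_integral_def
      by (intro integral_mono [OF _ **])
         (auto simp: divide_simps sin_x_le_x mult.commute[of u] mult_neg_pos top_unique less_top[symmetric]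
               split: split_indicator)
  qed
  also (xtrans) have "(LINT x : {x. abs x \<ge> 2 / u} | M. u) = u * measure M {x. abs x \<ge> 2 / u}"
    unfolding set_lebesgue_integral_def
    by (simp add: emeasure_eq_measure)
  finally show ?thesis .
qed

lemma (in real_distribution) tail_stable:
  assumes u: "u > 0" and C: "0 \<le> C" and a: "0 < \<alpha>"
    and ch: "\<And>\<theta>. char M \<theta> = complex_of_real (exp (- (\<bar>\<theta>\<bar> powr \<alpha> * C)))"
  shows "measure M {x. abs x \<ge> 2 / u} \<le> 2 * C * u powr \<alpha>"
proof -
  define f where "f t = 1 - exp (- (\<bar>t\<bar> powr \<alpha> * C))" for t
  have fm[measurable]: "f \<in> borel_measurable borel" unfolding f_def by measurable
  have fb: "f t \<le> C * u powr \<alpha>" if "t \<in> {-u..u}" for t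
  proof -
    have "1 - exp (- (\<bar>t\<bar> powr \<alpha> * C)) \<le> \<bar>t\<bar> powr \<alpha> * C"
      using exp_ge_add_one_self[of "- (\<bar>t\<bar> powr \<alpha> * C)"] by simp
    also have "\<dots> \<le> u powr \<alpha> * C" using that a C by (intro mult_right_mono powr_mono2) auto
    finally show ?thesis unfolding f_def by (simp add: mult.commute)
  qed
  have fi: "set_integrable lborel {-u..u} f"
    unfolding set_integrable_def
    by (intro integrableI_bounded_set_indicator[where B = "C * u powr \<alpha>"])
       (use fb C in \<open>auto simp: f_def emeasure_lborel_Icc_eq intro!: AE_I2\<close>)
  have ci: "set_integrable lborel {-u..u} (\<lambda>_. C * u powr \<alpha>)"
    unfolding set_integrable_def
    by (intro integrableI_bounded_set_indicator[where B = "C * u powr \<alpha>"]) (use C in \<open>auto simp: emeasure_lborel_Icc_eq\<close>)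
  have "u * measure M {x. abs x \<ge> 2 / u} \<le> Re (CLBINT t:{-u..u}. 1 - char M t)"
    by (rule trunc_ineq[OF u])
  also have "(CLBINT t:{-u..u}. 1 - char M t) = (CLBINT t:{-u..u}. complex_of_real (f t))"
    unfolding ch f_def by simp
  also have "\<dots> = complex_of_real (LBINT t:{-u..u}. f t)" by (rule set_integral_complex_of_real)
  also have "Re \<dots> = (LBINT t:{-u..u}. f t)" by simp
  also have "\<dots> \<le> (LBINT t:{-u..u}. C * u powr \<alpha>)"
    by (rule set_integral_mono[OF fi ci fb])
  also have "\<dots> = 2 * u * (C * u powr \<alpha>)"
    using u by (subst set_integral_const) auto
  finally have "u * measure M {x. abs x \<ge> 2 / u} \<le> u * (2 * C * u powr \<alpha>)" by (simp add: algebra_simps)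
  then show ?thesis using u by simp
qed

context SaS_setting begin

lemma G_scale: "G (c *\<^sub>R v) = \<bar>c\<bar> powr \<alpha> * G v"
proof -
  have "psi2 (c *\<^sub>R v) = (\<integral>\<^sup>+ s. ennreal (\<bar>c\<bar> powr \<alpha>) * ennreal (\<bar>inner v s\<bar> powr \<alpha>) \<partial>\<Gamma>2)"
    unfolding psi2_def by (intro nn_integral_cong) (simp add: abs_mult powr_mult ennreal_mult)
  also have "\<dots> = ennreal (\<bar>c\<bar> powr \<alpha>) * psi2 v"
    unfolding psi2_def by (rule nn_integral_cmult) (simp add: measurable_cong_sets[OF G_sets refl])
  finally show ?thesis unfolding G_def by (simp add: enn2real_mult)
qed

lemma comp_char:
  "char (distr M borel (\<lambda>\<omega>. \<epsilon> m \<omega> $ i)) \<theta> = complex_of_real (exp (- (\<bar>\<theta>\<bar> powr \<alpha> * G (axis i 1))))"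
proof -
  have "char (distr M borel (\<lambda>\<omega>. \<epsilon> m \<omega> $ i)) \<theta> = (\<integral>\<omega>. iexp (\<theta> * (\<epsilon> m \<omega> $ i)) \<partial>M)"
    unfolding char_def by (subst integral_distr) auto
  also have "\<dots> = char_fun_vec M (\<epsilon> m) (\<theta> *\<^sub>R axis i 1)"
    unfolding char_fun_vec_def by (simp add: cis_conv_exp inner_axis')
  also have "\<dots> = complex_of_real (exp (- (\<bar>\<theta>\<bar> powr \<alpha> * G (axis i 1))))"
    by (simp add: char_eps G_scale)
  finally show ?thesis .
qed

lemma tail_comp:
  assumes u: "u > 0"
  shows "measure M {\<omega> \<in> space M. 2 / u \<le> \<bar>\<epsilon> m \<omega> $ i\<bar>} \<le> 2 * G (axis i 1) * u powr \<alpha>"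
proof -
  interpret D: real_distribution "distr M borel (\<lambda>\<omega>. \<epsilon> m \<omega> $ i)"
    by (simp add: real_distribution_def real_distribution_axioms_def prob_space_distr)
  have "measure (distr M borel (\<lambda>\<omega>. \<epsilon> m \<omega> $ i)) {x. abs x \<ge> 2 / u} \<le> 2 * G (axis i 1) * u powr \<alpha>"
    by (rule D.tail_stable[OF u G_nonneg \<alpha>(1) comp_char])
  moreover have "measure (distr M borel (\<lambda>\<omega>. \<epsilon> m \<omega> $ i)) {x. abs x \<ge> 2 / u} =
      measure M {\<omega> \<in> space M. 2 / u \<le> \<bar>\<epsilon> m \<omega> $ i\<bar>}"
    by (subst measure_distr) (auto simp: vimage_def Int_def conj_commute)
  ultimately show ?thesis by simp
qed

lemma AE_summable_comp:
  fixes j :: "nat \<Rightarrow> int" and r :: real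
  assumes r: "0 < \<bar>r\<bar>" "\<bar>r\<bar> < 1"
  shows "AE \<omega> in M. summable (\<lambda>k. r ^ k * (\<epsilon> (j k) \<omega> $ i))"
proof -
  define q where "q = (1 + \<bar>r\<bar>) / 2"
  define b where "b = q / \<bar>r\<bar>"
  have q: "0 < q" "q < 1" using r unfolding q_def by auto
  have b: "1 < b" using r unfolding b_def q_def by (auto simp: field_simps)
  define A where "A k = {\<omega> \<in> space M. b ^ k \<le> \<bar>\<epsilon> (j k) \<omega> $ i\<bar>}" for k
  have A_meas[measurable]: "A k \<in> sets M" for k unfolding A_def by measurable
  define C where "C = G (axis i 1)"
  have C: "0 \<le> C" unfolding C_def by (rule G_nonneg)
  have Ab: "measure M (A k) \<le> 2 * C * 2 powr \<alpha> * (inverse (b powr \<alpha>)) ^ k" for k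
  proof -
    have u: "0 < 2 / b ^ k" using b by auto
    have "measure M (A k) = measure M {\<omega> \<in> space M. 2 / (2 / b ^ k) \<le> \<bar>\<epsilon> (j k) \<omega> $ i\<bar>}"
      unfolding A_def using b by simp
    also have "\<dots> \<le> 2 * C * (2 / b ^ k) powr \<alpha>" unfolding C_def by (rule tail_comp[OF u])
    also have "(2 / b ^ k) powr \<alpha> = 2 powr \<alpha> * (inverse (b powr \<alpha>)) ^ k"
    proof -
      have "(b ^ k) powr \<alpha> = (b powr \<alpha>) ^ k"
        using b by (simp add: powr_realpow[symmetric] powr_powr powr_power mult.commute)
      then show ?thesis by (simp only: powr_divide) (simp add: divide_inverse power_inverse)
    qed
    finally show ?thesis by (simp add: mult.assoc)
  qed
  have ib: "inverse (b powr \<alpha>) < 1" using gr_one_powr[of b \<alpha>] b \<alpha> by (auto simp: inverse_less_1_iff)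
  have ib0: "0 \<le> inverse (b powr \<alpha>)" by simp
  have sumA: "summable (\<lambda>k. measure M (A k))"
    by (rule summable_comparison_test[OF _ summable_mult[OF summable_geometric[of "inverse (b powr \<alpha>)"]]])
       (use Ab ib ib0 in auto)
  have "AE \<omega> in M. eventually (\<lambda>k. \<omega> \<in> space M - A k) sequentially"
    by (rule borel_cantelli_AE1[OF A_meas]) (use sumA in \<open>auto simp: emeasure_eq_measure\<close>)
  then show ?thesis
  proof (rule AE_mp[OF _ AE_I2], intro impI)
    fix \<omega> assume ev: "eventually (\<lambda>k. \<omega> \<in> space M - A k) sequentially" and \<omega>: "\<omega> \<in> space M"
    have "eventually (\<lambda>k. norm (r ^ k * (\<epsilon> (j k) \<omega> $ i)) \<le> q ^ k) sequentially"
    proof (rule eventually_mono[OF ev])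
      fix k assume "\<omega> \<in> space M - A k"
      then have "\<bar>\<epsilon> (j k) \<omega> $ i\<bar> < b ^ k" unfolding A_def using \<omega> by auto
      then have "\<bar>r\<bar> ^ k * \<bar>\<epsilon> (j k) \<omega> $ i\<bar> \<le> \<bar>r\<bar> ^ k * b ^ k"
        by (intro mult_left_mono) auto
      also have "\<dots> = q ^ k" unfolding b_def using r by (simp add: power_mult_distrib[symmetric])
      finally show "norm (r ^ k * (\<epsilon> (j k) \<omega> $ i)) \<le> q ^ k" by (simp add: abs_mult power_abs)
    qed
    then show "summable (\<lambda>k. r ^ k * (\<epsilon> (j k) \<omega> $ i))"
      by (rule summable_comparison_test_ev) (use q in \<open>auto intro: summable_geometric\<close>)
  qed
qed

end

lemma filterlim_nat_shift':
  "filterlim (\<lambda>n::nat. nat (c + int n) + 1) at_top sequentially"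
  unfolding filterlim_at_top eventually_sequentially
proof safe
  fix Z :: nat
  show "\<exists>N. \<forall>n\<ge>N. Z \<le> nat (c + int n) + 1"
    by (rule exI[of _ "Z + nat \<bar>c\<bar>"]) auto
qed

lemma psum_fwd:
  fixes f :: "int \<Rightarrow> real"
  assumes "summable (\<lambda>k. r ^ k * f (s + int k))"
  shows "(\<lambda>n::nat. \<Sum>m\<in>{a - int n..a + int n}. (if s \<le> m then r ^ nat (m - s) else 0) * f m)
           \<longlonglongrightarrow> (\<Sum>k. r ^ k * f (s + int k))"
proof -
  define g where "g m = (if s \<le> m then r ^ nat (m - s) else 0) * f m" for m
  have lim: "(\<lambda>N. \<Sum>k<N. r ^ k * f (s + int k)) \<longlonglongrightarrow> (\<Sum>k. r ^ k * f (s + int k))"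
    using summable_LIMSEQ[OF assms] .
  have lim2: "(\<lambda>n::nat. \<Sum>k<nat (a - s + int n) + 1. r ^ k * f (s + int k)) \<longlonglongrightarrow> (\<Sum>k. r ^ k * f (s + int k))"
    (is "(\<lambda>n. \<Sum>k<nat (?c + int n) + 1. ?h k) \<longlonglongrightarrow> _")
    by (rule filterlim_compose[OF lim filterlim_nat_shift'])
  have eq: "(\<Sum>k<nat (a - s + int n) + 1. r ^ k * f (s + int k)) = (\<Sum>m\<in>{a - int n..a + int n}. g m)"
    if n: "nat \<bar>a - s\<bar> \<le> n" for n
  proof -
    have "(\<Sum>m\<in>{a - int n..a + int n}. g m) = (\<Sum>m\<in>{s..a + int n}. g m)"
      by (rule sum.mono_neutral_right) (use n in \<open>auto simp: g_def\<close>)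
    also have "\<dots> = (\<Sum>k<nat (a - s + int n) + 1. r ^ k * f (s + int k))"
      by (rule sum.reindex_bij_witness[where i = "\<lambda>k. s + int k" and j = "\<lambda>m. nat (m - s)"])
         (use n in \<open>auto simp: g_def\<close>)
    finally show ?thesis by simp
  qed
  have ev: "eventually (\<lambda>n. (\<Sum>k<nat (?c + int n) + 1. ?h k) = (\<Sum>m\<in>{a - int n..a + int n}. g m)) sequentially"
    unfolding eventually_sequentially using eq by blast
  show ?thesis using Lim_transform_eventually[OF lim2 ev] unfolding g_def .
qed

lemma psum_bwd:
  fixes f :: "int \<Rightarrow> real"
  assumes "summable (\<lambda>k. r ^ k * f (s - int k))"
  shows "(\<lambda>n::nat. \<Sum>m\<in>{a - int n..a + int n}. (if m \<le> s then r ^ nat (s - m) else 0) * f m)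
           \<longlonglongrightarrow> (\<Sum>k. r ^ k * f (s - int k))"
proof -
  define g where "g m = (if m \<le> s then r ^ nat (s - m) else 0) * f m" for m
  have lim: "(\<lambda>N. \<Sum>k<N. r ^ k * f (s - int k)) \<longlonglongrightarrow> (\<Sum>k. r ^ k * f (s - int k))"
    using summable_LIMSEQ[OF assms] .
  have lim2: "(\<lambda>n::nat. \<Sum>k<nat (s - a + int n) + 1. r ^ k * f (s - int k)) \<longlonglongrightarrow> (\<Sum>k. r ^ k * f (s - int k))"
    (is "(\<lambda>n. \<Sum>k<nat (?c + int n) + 1. ?h k) \<longlonglongrightarrow> _")
    by (rule filterlim_compose[OF lim filterlim_nat_shift'])
  have eq: "(\<Sum>k<nat (s - a + int n) + 1. r ^ k * f (s - int k)) = (\<Sum>m\<in>{a - int n..a + int n}. g m)"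
    if n: "nat \<bar>a - s\<bar> \<le> n" for n
  proof -
    have "(\<Sum>m\<in>{a - int n..a + int n}. g m) = (\<Sum>m\<in>{a - int n..s}. g m)"
      by (rule sum.mono_neutral_right) (use n in \<open>auto simp: g_def\<close>)
    also have "\<dots> = (\<Sum>k<nat (s - a + int n) + 1. r ^ k * f (s - int k))"
      by (rule sum.reindex_bij_witness[where i = "\<lambda>k. s - int k" and j = "\<lambda>m. nat (s - m)"])
         (use n in \<open>auto simp: g_def\<close>)
    finally show ?thesis by simp
  qed
  have ev: "eventually (\<lambda>n. (\<Sum>k<nat (?c + int n) + 1. ?h k) = (\<Sum>m\<in>{a - int n..a + int n}. g m)) sequentially"
    unfolding eventually_sequentially using eq by blast
  show ?thesis using Lim_transform_eventually[OF lim2 ev] unfolding g_def .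
qed


context SaS_setting begin

definition cA :: "int \<Rightarrow> int \<Rightarrow> real" where "cA s m = (if s \<le> m then \<rho>1 ^ nat (m - s) else 0)"
definition cB :: "int \<Rightarrow> int \<Rightarrow> real" where "cB s m = (if m \<le> s then \<rho>2 ^ nat (s - m) else 0)"

definition Am :: "int \<Rightarrow> real^2 \<Rightarrow> real^4" where
  "Am m s = vector [cA t m * s$1, cB t m * s$2, cA (t+1) m * s$1, cB (t+1) m * s$2]"

definition Bm :: "real^4 \<Rightarrow> int \<Rightarrow> real^2" where
  "Bm u m = vector [u$1 * cA t m + u$3 * cA (t+1) m, u$2 * cB t m + u$4 * cB (t+1) m]"

definition Xv :: "'a \<Rightarrow> real^4" where
  "Xv \<omega> = vector [X1_proc \<rho>1 \<epsilon> t \<omega>, X2_proc \<rho>2 \<epsilon> t \<omega>, X1_proc \<rho>1 \<epsilon> (t + 1) \<omega>, X2_proc \<rho>2 \<epsilon> (t + 1) \<omega>]"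

lemma inner_Am: "inner u (Am m s) = inner (Bm u m) s"
  unfolding Am_def Bm_def inner4 inner2 by (simp add: algebra_simps)

lemma Am_uminus: "Am m (- s) = - Am m s"
  unfolding Am_def by (simp add: vec_eq_iff forall_4)

lemma Am_meas[measurable]: "Am m \<in> borel_measurable borel"
  unfolding Am_def by measurable

lemma Xv_meas[measurable]: "Xv \<in> borel_measurable M"
  unfolding Xv_def X1_proc_def X2_proc_def by measurable

lemma Xv_inner: "inner u (Xv \<omega>) = u$1 * X1_proc \<rho>1 \<epsilon> t \<omega> + u$2 * X2_proc \<rho>2 \<epsilon> t \<omega> +
    u$3 * X1_proc \<rho>1 \<epsilon> (t + 1) \<omega> + u$4 * X2_proc \<rho>2 \<epsilon> (t + 1) \<omega>"
  unfolding Xv_def inner4 by (simp add: mult.commute)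

definition good :: "'a \<Rightarrow> bool" where
  "good \<omega> \<longleftrightarrow> summable (\<lambda>k. \<rho>1 ^ k * (\<epsilon> (t + int k) \<omega> $ 1)) \<and>
               summable (\<lambda>k. \<rho>1 ^ k * (\<epsilon> ((t + 1) + int k) \<omega> $ 1)) \<and>
               summable (\<lambda>k. \<rho>2 ^ k * (\<epsilon> (t - int k) \<omega> $ 2)) \<and>
               summable (\<lambda>k. \<rho>2 ^ k * (\<epsilon> ((t + 1) - int k) \<omega> $ 2))"

lemma AE_good: "AE \<omega> in M. good \<omega>"
  unfolding good_def using \<rho>
  by (intro AE_conjI AE_summable_comp) auto

definition Fn :: "nat \<Rightarrow> int set" where "Fn n = {t - int n..t + int n}"

lemma Xv_lim:
  assumes "good \<omega>"
  shows "(\<lambda>n. \<Sum>m\<in>Fn n. inner (Bm u m) (\<epsilon> m \<omega>)) \<longlonglongrightarrow> inner u (Xv \<omega>)"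
proof -
  have s: "(\<Sum>m\<in>Fn n. inner (Bm u m) (\<epsilon> m \<omega>)) =
     u$1 * (\<Sum>m\<in>Fn n. cA t m * (\<epsilon> m \<omega> $ 1)) + u$2 * (\<Sum>m\<in>Fn n. cB t m * (\<epsilon> m \<omega> $ 2)) +
     u$3 * (\<Sum>m\<in>Fn n. cA (t+1) m * (\<epsilon> m \<omega> $ 1)) + u$4 * (\<Sum>m\<in>Fn n. cB (t+1) m * (\<epsilon> m \<omega> $ 2))" for n
    unfolding Bm_def inner2 by (simp add: sum_distrib_left sum.distrib algebra_simps)
  have l1: "(\<lambda>n. \<Sum>m\<in>Fn n. cA s m * (\<epsilon> m \<omega> $ 1)) \<longlonglongrightarrow> X1_proc \<rho>1 \<epsilon> s \<omega>"
    if "summable (\<lambda>k. \<rho>1 ^ k * (\<epsilon> (s + int k) \<omega> $ 1))" for s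
    unfolding Fn_def cA_def X1_proc_def by (rule psum_fwd[OF that])
  have l2: "(\<lambda>n. \<Sum>m\<in>Fn n. cB s m * (\<epsilon> m \<omega> $ 2)) \<longlonglongrightarrow> X2_proc \<rho>2 \<epsilon> s \<omega>"
    if "summable (\<lambda>k. \<rho>2 ^ k * (\<epsilon> (s - int k) \<omega> $ 2))" for s
    unfolding Fn_def cB_def X2_proc_def by (rule psum_bwd[OF that])
  show ?thesis unfolding s Xv_inner
    using assms unfolding good_def
    by (intro tendsto_add tendsto_mult_left l1 l2) auto
qed

lemma char_partial:
  "(\<integral>\<omega>. cis (\<Sum>m\<in>Fn n. inner (Bm u m) (\<epsilon> m \<omega>)) \<partial>M) = complex_of_real (exp (- (\<Sum>m\<in>Fn n. G (Bm u m))))"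
  by (rule char_sum) (simp add: Fn_def)

lemma char_Xv_lim:
  "(\<lambda>n. complex_of_real (exp (- (\<Sum>m\<in>Fn n. G (Bm u m))))) \<longlonglongrightarrow> char_fun_vec M Xv u"
proof -
  have "(\<lambda>n. \<integral>\<omega>. cis (\<Sum>m\<in>Fn n. inner (Bm u m) (\<epsilon> m \<omega>)) \<partial>M) \<longlonglongrightarrow> (\<integral>\<omega>. cis (inner u (Xv \<omega>)) \<partial>M)"
  proof (rule integral_dominated_convergence[where w = "\<lambda>_. 1"])
    show "AE \<omega> in M. (\<lambda>n. cis (\<Sum>m\<in>Fn n. inner (Bm u m) (\<epsilon> m \<omega>))) \<longlonglongrightarrow> cis (inner u (Xv \<omega>))"
      using AE_good by eventually_elim (intro tendsto_cis Xv_lim)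
  qed (auto simp: Fn_def)
  then show ?thesis unfolding char_partial char_fun_vec_def .
qed

end

lemma geo_sym_interval:
  fixes q :: real assumes q: "0 \<le> q" "q < 1"
  shows "(\<Sum>m\<in>{s - int N..s + int N}. q ^ nat \<bar>m - s\<bar>) = 2 * (\<Sum>k<Suc N. q ^ k) - 1"
proof (induction N)
  case 0
  then show ?case by simp
next
  case (Suc N)
  have e: "{s - int (Suc N)..s + int (Suc N)} = insert (s - int N - 1) (insert (s + int N + 1) {s - int N..s + int N})"
    by auto
  have n1: "nat \<bar>s - int N - 1 - s\<bar> = Suc N" "nat \<bar>s + int N + 1 - s\<bar> = Suc N"
    "nat (1 + int N) = Suc N" "nat (int N + 1) = Suc N" by auto
  show ?case unfolding e using Suc by (simp add: n1)
qed

lemma geo_sym_bound: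
  fixes q :: real assumes q: "0 \<le> q" "q < 1" and A: "finite A"
  shows "(\<Sum>m\<in>A. q ^ nat \<bar>m - s\<bar>) \<le> 2 / (1 - q)"
proof -
  obtain N :: nat where N: "\<forall>m\<in>A. \<bar>m - s\<bar> \<le> int N"
  proof -
    have "finite ((\<lambda>m. nat \<bar>m - s\<bar>) ` A)" using A by simp
    then obtain N where "\<forall>x\<in>(\<lambda>m. nat \<bar>m - s\<bar>) ` A. x \<le> N"
      using finite_nat_set_iff_bounded_le by blast
    then show ?thesis using that[of N] by force
  qed
  have "(\<Sum>m\<in>A. q ^ nat \<bar>m - s\<bar>) \<le> (\<Sum>m\<in>{s - int N..s + int N}. q ^ nat \<bar>m - s\<bar>)"
  proof (rule sum_mono2)
    show "A \<subseteq> {s - int N..s + int N}" using N by (force simp: abs_le_iff)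
  qed (use q in auto)
  also have "\<dots> = 2 * (\<Sum>k<Suc N. q ^ k) - 1" by (rule geo_sym_interval[OF q])
  also have "(\<Sum>k<Suc N. q ^ k) \<le> 1 / (1 - q)"
    using sum_le_suminf[OF summable_geometric[of q], of "{..<Suc N}"] suminf_geometric[of q] q by auto
  then have "2 * (\<Sum>k<Suc N. q ^ k) - 1 \<le> 2 / (1 - q)" by simp
  finally show ?thesis .
qed

context SaS_setting begin

definition Lam :: "(real^4) measure" where "Lam = Lmeas \<Gamma>2 Am"

definition T :: "real^4 \<Rightarrow> ennreal" where
  "T u = (\<integral>\<^sup>+ x. ennreal (\<bar>inner u x\<bar> powr \<alpha>) \<partial>Lam)"

lemma Lam_sets: "sets Lam = sets borel" unfolding Lam_def by (rule Lmeas_sets)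

lemma Lam_nn_integral:
  assumes "h \<in> borel_measurable borel"
  shows "(\<integral>\<^sup>+ x. h x \<partial>Lam) = (\<integral>\<^sup>+ m. (\<integral>\<^sup>+ s. h (Am m s) \<partial>\<Gamma>2) \<partial>count_space UNIV)"
  unfolding Lam_def by (rule Lmeas_nn_integral[OF G_sets G_sf Am_meas assms])

lemma Lam_symm: "symm Lam"
  unfolding Lam_def by (rule Lmeas_symm[OF G_sets G_sf G_symm Am_meas Am_uminus])

lemma T_eq: "T u = (\<integral>\<^sup>+ m. ennreal (G (Bm u m)) \<partial>count_space UNIV)"
  unfolding T_def by (subst Lam_nn_integral) (simp_all add: inner_Am psi2_def[symmetric] psi2_G)

lemma partial_T: "(\<lambda>n. ennreal (\<Sum>m\<in>Fn n. G (Bm u m))) \<longlonglongrightarrow> T u"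
proof -
  define g where "g n m = ennreal (G (Bm u m)) * indicator (Fn n) m" for n m
  have inc: "incseq g"
    unfolding g_def incseq_def le_fun_def Fn_def
    by (auto intro!: mult_left_mono split: split_indicator)
  have sup: "(SUP n. g n m) = ennreal (G (Bm u m))" for m
  proof (rule antisym)
    show "(SUP n. g n m) \<le> ennreal (G (Bm u m))"
      by (rule SUP_least) (auto simp: g_def split: split_indicator)
    have "m \<in> Fn (nat \<bar>m - t\<bar>)" unfolding Fn_def by auto
    then have "g (nat \<bar>m - t\<bar>) m = ennreal (G (Bm u m))" unfolding g_def by simp
    then show "ennreal (G (Bm u m)) \<le> (SUP n. g n m)" by (metis SUP_upper UNIV_I)
  qed
  have part: "(\<integral>\<^sup>+ m. g n m \<partial>count_space UNIV) = ennreal (\<Sum>m\<in>Fn n. G (Bm u m))" for n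
  proof -
    have "(\<integral>\<^sup>+ m. g n m \<partial>count_space UNIV) = (\<integral>\<^sup>+ m. ennreal (G (Bm u m)) \<partial>count_space (Fn n))"
      unfolding g_def by (simp add: nn_integral_count_space_indicator)
    also have "\<dots> = (\<Sum>m\<in>Fn n. ennreal (G (Bm u m)))"
      by (rule nn_integral_count_space_finite) (simp add: Fn_def)
    finally show ?thesis by (simp add: G_nonneg)
  qed
  have "T u = (\<integral>\<^sup>+ m. (SUP n. g n m) \<partial>count_space UNIV)" unfolding T_eq sup ..
  also have "\<dots> = (SUP n. \<integral>\<^sup>+ m. g n m \<partial>count_space UNIV)"
    by (rule nn_integral_monotone_convergence_SUP[OF inc]) simp
  finally have Tsup: "T u = (SUP n. ennreal (\<Sum>m\<in>Fn n. G (Bm u m)))" unfolding part .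
  have inc2: "incseq (\<lambda>n. ennreal (\<Sum>m\<in>Fn n. G (Bm u m)))"
    unfolding part[symmetric] using inc unfolding incseq_def le_fun_def
    by (auto intro!: nn_integral_mono)
  show ?thesis unfolding Tsup by (rule LIMSEQ_SUP[OF inc2])
qed

definition lam :: real where "lam = max \<bar>\<rho>1\<bar> \<bar>\<rho>2\<bar>"

lemma lam: "0 < lam" "lam < 1" "\<bar>\<rho>1\<bar> \<le> lam" "\<bar>\<rho>2\<bar> \<le> lam"
  using \<rho> unfolding lam_def by auto

lemma coef_shift: "lam ^ nat \<bar>m - s\<bar> \<le> lam ^ nat \<bar>m - t\<bar> / lam" if "s = t \<or> s = t + 1"
proof -
  have "lam ^ nat \<bar>m - s\<bar> * lam = lam ^ Suc (nat \<bar>m - s\<bar>)" by simp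
  also have "\<dots> \<le> lam ^ nat \<bar>m - t\<bar>"
    by (rule power_decreasing) (use that lam in auto)
  finally show ?thesis using lam by (simp add: field_simps)
qed

lemma cA_bound: "\<bar>cA s m\<bar> \<le> lam ^ nat \<bar>m - t\<bar> / lam" if "s = t \<or> s = t + 1"
proof -
  have "\<bar>cA s m\<bar> \<le> lam ^ nat \<bar>m - s\<bar>"
    unfolding cA_def using lam by (auto simp: power_abs intro!: power_mono)
  then show ?thesis using coef_shift[OF that, of m] by linarith
qed

lemma cB_bound: "\<bar>cB s m\<bar> \<le> lam ^ nat \<bar>m - t\<bar> / lam" if "s = t \<or> s = t + 1"
proof -
  have "\<bar>cB s m\<bar> \<le> lam ^ nat \<bar>m - s\<bar>"
    unfolding cB_def using lam by (auto simp: power_abs intro!: power_mono)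
  then show ?thesis using coef_shift[OF that, of m] by linarith
qed

lemma norm_Bm: "norm (Bm u m) \<le> (\<bar>u$1\<bar> + \<bar>u$2\<bar> + \<bar>u$3\<bar> + \<bar>u$4\<bar>) * (lam ^ nat \<bar>m - t\<bar> / lam)"
proof -
  define E where "E = lam ^ nat \<bar>m - t\<bar> / lam"
  have c: "\<bar>cA t m\<bar> \<le> E" "\<bar>cA (t+1) m\<bar> \<le> E" "\<bar>cB t m\<bar> \<le> E" "\<bar>cB (t+1) m\<bar> \<le> E"
    unfolding E_def by (auto intro: cA_bound cB_bound)
  have "norm (Bm u m) \<le> \<bar>Bm u m $ 1\<bar> + \<bar>Bm u m $ 2\<bar>"
    using norm_le_l1_cart[of "Bm u m"] by (simp add: sum_2)
  also have "\<bar>Bm u m $ 1\<bar> \<le> \<bar>u$1\<bar> * E + \<bar>u$3\<bar> * E"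
    unfolding Bm_def using c
    by (simp, intro order_trans[OF abs_triangle_ineq] add_mono) (auto simp: abs_mult intro: mult_left_mono)
  also have "\<bar>Bm u m $ 2\<bar> \<le> \<bar>u$2\<bar> * E + \<bar>u$4\<bar> * E"
    unfolding Bm_def using c
    by (simp, intro order_trans[OF abs_triangle_ineq] add_mono) (auto simp: abs_mult intro: mult_left_mono)
  finally show ?thesis unfolding E_def by (simp add: algebra_simps)
qed

lemma G_le_norm: "G v \<le> norm v powr \<alpha> * measure \<Gamma>2 (space \<Gamma>2)"
proof -
  have "psi2 v \<le> (\<integral>\<^sup>+ s. ennreal (norm v powr \<alpha>) \<partial>\<Gamma>2)"
    unfolding psi2_def
  proof (rule nn_integral_mono_AE)
    show "AE s in \<Gamma>2. ennreal (\<bar>inner v s\<bar> powr \<alpha>) \<le> ennreal (norm v powr \<alpha>)"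
      using AE_sphere
    proof eventually_elim
      case (elim s)
      then have "\<bar>inner v s\<bar> \<le> norm v" using Cauchy_Schwarz_ineq2[of v s] by simp
      then show ?case by (intro ennreal_leI powr_mono2) (use \<alpha> in auto)
    qed
  qed
  also have "\<dots> = ennreal (norm v powr \<alpha>) * emeasure \<Gamma>2 (space \<Gamma>2)" by simp
  also have "\<dots> = ennreal (norm v powr \<alpha> * measure \<Gamma>2 (space \<Gamma>2))"
    using G_finite by (simp add: finite_measure.emeasure_eq_measure ennreal_mult)
  finally have "psi2 v \<le> ennreal (norm v powr \<alpha> * measure \<Gamma>2 (space \<Gamma>2))" .
  then show ?thesis unfolding G_def
    using enn2real_mono[of "psi2 v" "ennreal (norm v powr \<alpha> * measure \<Gamma>2 (space \<Gamma>2))"] by simp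
qed

lemma partial_bound: "(\<Sum>m\<in>Fn n. G (Bm u m)) \<le>
  measure \<Gamma>2 (space \<Gamma>2) * ((\<bar>u$1\<bar> + \<bar>u$2\<bar> + \<bar>u$3\<bar> + \<bar>u$4\<bar>) / lam) powr \<alpha> * (2 / (1 - lam powr \<alpha>))"
proof -
  define K where "K = measure \<Gamma>2 (space \<Gamma>2)"
  define U where "U = (\<bar>u$1\<bar> + \<bar>u$2\<bar> + \<bar>u$3\<bar> + \<bar>u$4\<bar>) / lam"
  have K: "0 \<le> K" unfolding K_def by simp
  have U: "0 \<le> U" unfolding U_def using lam by simp
  have q: "0 \<le> lam powr \<alpha>" "lam powr \<alpha> < 1" using lam \<alpha> powr_less_mono2[of \<alpha> lam 1] by auto
  have b: "G (Bm u m) \<le> K * U powr \<alpha> * (lam powr \<alpha>) ^ nat \<bar>m - t\<bar>" for m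
  proof -
    have "norm (Bm u m) \<le> U * lam ^ nat \<bar>m - t\<bar>"
      using norm_Bm[of u m] unfolding U_def by (simp add: field_simps)
    then have "norm (Bm u m) powr \<alpha> \<le> (U * lam ^ nat \<bar>m - t\<bar>) powr \<alpha>"
      by (intro powr_mono2) (use \<alpha> in auto)
    also have "\<dots> = U powr \<alpha> * (lam powr \<alpha>) ^ nat \<bar>m - t\<bar>"
      using U lam by (simp add: powr_mult powr_realpow[symmetric] powr_powr powr_power mult.commute)
    finally have "norm (Bm u m) powr \<alpha> \<le> U powr \<alpha> * (lam powr \<alpha>) ^ nat \<bar>m - t\<bar>" .
    then have "norm (Bm u m) powr \<alpha> * K \<le> U powr \<alpha> * (lam powr \<alpha>) ^ nat \<bar>m - t\<bar> * K"
      using K by (rule mult_right_mono)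
    then show ?thesis using G_le_norm[of "Bm u m"] unfolding K_def by (simp add: algebra_simps)
  qed
  have "(\<Sum>m\<in>Fn n. G (Bm u m)) \<le> (\<Sum>m\<in>Fn n. K * U powr \<alpha> * (lam powr \<alpha>) ^ nat \<bar>m - t\<bar>)"
    by (rule sum_mono[OF b])
  also have "\<dots> = K * U powr \<alpha> * (\<Sum>m\<in>Fn n. (lam powr \<alpha>) ^ nat \<bar>m - t\<bar>)"
    by (simp add: sum_distrib_left)
  also have "\<dots> \<le> K * U powr \<alpha> * (2 / (1 - lam powr \<alpha>))"
    by (intro mult_left_mono geo_sym_bound q) (use K in \<open>auto simp: Fn_def\<close>)
  finally show ?thesis unfolding K_def U_def .
qed

lemma T_fin: "T u < \<infinity>"
proof -
  define B where "B = measure \<Gamma>2 (space \<Gamma>2) * ((\<bar>u$1\<bar> + \<bar>u$2\<bar> + \<bar>u$3\<bar> + \<bar>u$4\<bar>) / lam) powr \<alpha> * (2 / (1 - lam powr \<alpha>))"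
  have "T u \<le> ennreal B"
    using LIMSEQ_le_const2[OF partial_T[of u]] partial_bound[where u=u] unfolding B_def
    by (metis ennreal_leI)
  then show ?thesis using le_less_trans by fastforce
qed

lemma partial_T_real: "(\<lambda>n. \<Sum>m\<in>Fn n. G (Bm u m)) \<longlonglongrightarrow> enn2real (T u)"
proof -
  have "(\<lambda>n. enn2real (ennreal (\<Sum>m\<in>Fn n. G (Bm u m)))) \<longlonglongrightarrow> enn2real (T u)"
    by (rule tendsto_enn2real) (use partial_T[of u] T_fin[of u] in \<open>auto simp: ennreal_enn2real less_top\<close>)
  then show ?thesis by (simp add: G_nonneg sum_nonneg)
qed

lemma char_Xv: "char_fun_vec M Xv u = complex_of_real (exp (- enn2real (T u)))"
proof -
  have "(\<lambda>n. complex_of_real (exp (- (\<Sum>m\<in>Fn n. G (Bm u m))))) \<longlonglongrightarrow> complex_of_real (exp (- enn2real (T u)))"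
    by (intro tendsto_intros partial_T_real)
  from LIMSEQ_unique[OF char_Xv_lim this] show ?thesis .
qed

end

interpretation nrm: hom_fun "norm :: real^4 \<Rightarrow> real"
  by unfold_locales auto

interpretation sn: hom_fun seminorm12
proof
  show "seminorm12 \<in> borel_measurable borel" unfolding seminorm12_def by measurable
  show "0 \<le> seminorm12 x" for x unfolding seminorm12_def by simp
  show "seminorm12 (c *\<^sub>R x) = \<bar>c\<bar> * seminorm12 x" for c x
  proof -
    have "(c * x $ 1)\<^sup>2 + (c * x $ 2)\<^sup>2 = c\<^sup>2 * ((x $ 1)\<^sup>2 + (x $ 2)\<^sup>2)" by (simp add: algebra_simps power_mult_distrib)
    then show ?thesis unfolding seminorm12_def by (simp add: real_sqrt_mult)
  qed
qed

lemma norm4_powr_bound: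
  fixes x :: "real^4" assumes a: "0 < \<alpha>"
  shows "norm x powr \<alpha> \<le> 4 powr \<alpha> * (\<bar>x$1\<bar> powr \<alpha> + \<bar>x$2\<bar> powr \<alpha> + \<bar>x$3\<bar> powr \<alpha> + \<bar>x$4\<bar> powr \<alpha>)"
proof -
  define Mx where "Mx = max (max \<bar>x$1\<bar> \<bar>x$2\<bar>) (max \<bar>x$3\<bar> \<bar>x$4\<bar>)"
  have "norm x \<le> \<bar>x$1\<bar> + \<bar>x$2\<bar> + \<bar>x$3\<bar> + \<bar>x$4\<bar>" using norm_le_l1_cart[of x] by (simp add: sum_4)
  also have "\<dots> \<le> 4 * Mx" unfolding Mx_def by linarith
  finally have "norm x powr \<alpha> \<le> (4 * Mx) powr \<alpha>" by (intro powr_mono2) (use a in auto)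
  also have "\<dots> = 4 powr \<alpha> * Mx powr \<alpha>" unfolding Mx_def by (simp add: powr_mult)
  also have "Mx powr \<alpha> \<le> \<bar>x$1\<bar> powr \<alpha> + \<bar>x$2\<bar> powr \<alpha> + \<bar>x$3\<bar> powr \<alpha> + \<bar>x$4\<bar> powr \<alpha>"
    unfolding Mx_def max_def
    using powr_ge_zero[of "\<bar>x$1\<bar>" \<alpha>] powr_ge_zero[of "\<bar>x$2\<bar>" \<alpha>] powr_ge_zero[of "\<bar>x$3\<bar>" \<alpha>] powr_ge_zero[of "\<bar>x$4\<bar>" \<alpha>]
    by (auto split: if_splits)
  finally show ?thesis by (simp add: mult_left_mono)
qed

context SaS_setting begin

lemma T_axis: "T (axis i 1) = (\<integral>\<^sup>+ x. ennreal (\<bar>x $ i\<bar> powr \<alpha>) \<partial>Lam)"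
  unfolding T_def by (simp add: inner_axis')

definition Gs :: "(real^4) measure" where "Gs = Nmeas \<alpha> norm Lam"

lemma Gs_psi: "(\<integral>\<^sup>+ y. ennreal (\<bar>inner u y\<bar> powr \<alpha>) \<partial>Gs) = T u"
  unfolding Gs_def T_def
  by (subst nrm.Nmeas_psi[OF Lam_sets \<alpha>(1)]) (auto intro!: nn_integral_cong simp: indicator_def)

lemma Gs_finite: "finite_measure Gs"
proof (rule finite_measureI)
  have "emeasure Gs (space Gs) = (\<integral>\<^sup>+ x. ennreal (norm x powr \<alpha>) \<partial>Lam)"
    unfolding Gs_def using nrm.Nmeas_total[OF Lam_sets] nrm.Nmeas_sets[of \<alpha> Lam]
    by (simp add: sets_eq_imp_space_eq)
  also have "\<dots> \<le> (\<integral>\<^sup>+ x. ennreal (4 powr \<alpha>) * (ennreal (\<bar>x$1\<bar> powr \<alpha>) + ennreal (\<bar>x$2\<bar> powr \<alpha>)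
        + ennreal (\<bar>x$3\<bar> powr \<alpha>) + ennreal (\<bar>x$4\<bar> powr \<alpha>)) \<partial>Lam)"
    by (intro nn_integral_mono) (use norm4_powr_bound[OF \<alpha>(1)] in \<open>auto simp: ennreal_mult[symmetric] ennreal_plus[symmetric] simp del: ennreal_plus\<close>)
  also have "\<dots> = ennreal (4 powr \<alpha>) * (T (axis 1 1) + T (axis 2 1) + T (axis 3 1) + T (axis 4 1))"
    unfolding T_axis using Lam_sets
    by (simp add: nn_integral_cmult nn_integral_add measurable_cong_sets[OF Lam_sets refl])
  also have "\<dots> < \<infinity>" using T_fin by (simp add: ennreal_mult_less_top)
  finally show "emeasure Gs (space Gs) \<noteq> \<infinity>" by simp
qed

lemma sphere_eq: "sphere (0::real^4) 1 = {x. norm x = 1}" by (auto simp: sphere_def)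

lemma represents_sphere: "represents_on (sphere 0 1) \<alpha> Gs M Xv"
  unfolding represents_on_def sym_borel_measure_on_def
proof (intro conjI allI ballI)
  show "Xv \<in> borel_measurable M" by simp
  show "sets Gs = sets borel" unfolding Gs_def by (rule nrm.Nmeas_sets)
  show "sphere (0::real^4) 1 \<in> sets borel" unfolding sphere_eq by measurable
  show "emeasure Gs (- sphere (0::real^4) 1) = 0" unfolding sphere_eq Gs_def by (rule nrm.Nmeas_support[OF Lam_sets])
  show "emeasure Gs (uminus ` A) = emeasure Gs A" if "A \<in> sets borel" for A
    using sets_from_symm[OF _ _ that] nrm.Nmeas_symm[OF Lam_sets Lam_symm] nrm.Nmeas_sets unfolding Gs_def by blast
  show "(\<integral>\<^sup>+ s. ennreal (\<bar>inner u s\<bar> powr \<alpha>) \<partial>Gs) < \<infinity>" for u unfolding Gs_psi by (rule T_fin)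
  show "char_fun_vec M Xv u = complex_of_real (exp (- enn2real (\<integral>\<^sup>+ s. ennreal (\<bar>inner u s\<bar> powr \<alpha>) \<partial>Gs)))" for u
    unfolding Gs_psi by (rule char_Xv)
qed

lemma SaS_Xv: "SaS \<alpha> M Xv"
  unfolding SaS_def SaS_spectral_def using Gs_finite represents_sphere by blast

end

definition P2 :: "(real^2) set" where "P2 = {vector [0, -1], vector [0, 1]}"

lemma P2_sets: "P2 \<in> sets borel"
  unfolding P2_def by (intro borel_closed finite_imp_closed) simp

lemma sphere2_P2:
  fixes s :: "real^2"
  assumes "s \<in> sphere 0 1" "s $ 1 = 0"
  shows "s \<in> P2"
proof -
  have "inner s s = 1" using power2_norm_eq_inner[of s] assms by simp
  then have "(s$2)\<^sup>2 = 1" using assms by (simp add: inner2 power2_eq_square)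
  then have "s$2 = 1 \<or> s$2 = -1" by (simp add: power2_eq_1_iff)
  then show ?thesis unfolding P2_def using assms(2) by (auto simp: vec_eq_iff forall_2)
qed

lemma P2_elem: "s \<in> P2 \<Longrightarrow> s $ 1 = 0 \<and> \<bar>s $ 2\<bar> = 1"
  unfolding P2_def by auto

lemma seminorm12_zero: "seminorm12 x = 0 \<longleftrightarrow> x $ 1 = 0 \<and> x $ 2 = 0"
  unfolding seminorm12_def by (simp add: add_nonneg_eq_0_iff)

lemma cyl4_sets: "cyl4 \<in> sets borel"
  unfolding cyl4_def seminorm12_def by measurable

lemma nn_integral_count_space_ge: "f a \<le> (\<integral>\<^sup>+ m. f m \<partial>count_space UNIV)"
proof -
  have "f a = (\<integral>\<^sup>+ m. f m * indicator {a} m \<partial>count_space UNIV)" by simp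
  also have "\<dots> \<le> (\<integral>\<^sup>+ m. f m \<partial>count_space UNIV)"
    by (intro nn_integral_mono) (auto split: split_indicator)
  finally show ?thesis .
qed

context SaS_setting begin

lemma cA_nz: "t \<le> m \<Longrightarrow> cA t m \<noteq> 0" unfolding cA_def using \<rho> by auto
lemma cB_nz: "m \<le> t \<Longrightarrow> cB t m \<noteq> 0" unfolding cB_def using \<rho> by auto

lemma zero_case:
  assumes s: "s \<in> sphere 0 1" "s \<notin> P2" and z: "seminorm12 (Am m s) = 0"
  shows "inner u (Am m s) = 0"
proof -
  have z1: "cA t m * s$1 = 0" and z2: "cB t m * s$2 = 0"
    using z unfolding seminorm12_zero Am_def by auto
  have inn: "inner u (Am m s) = (u$1 * cA t m + u$3 * cA (t+1) m) * s$1 + (u$2 * cB t m + u$4 * cB (t+1) m) * s$2"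
    unfolding inner_Am Bm_def inner2 by simp
  consider "m < t" | "m = t" | "m = t + 1" | "t + 1 < m" by linarith
  then show ?thesis
  proof cases
    case 1
    then have "s$2 = 0" using z2 cB_nz[of m] by auto
    moreover have "cA t m = 0" "cA (t+1) m = 0" using 1 unfolding cA_def by auto
    ultimately show ?thesis unfolding inn by simp
  next
    case 2
    then have "s$1 = 0" "s$2 = 0" using z1 z2 by (auto simp: cA_def cB_def)
    then show ?thesis unfolding inn by simp
  next
    case 3
    then have "s$1 = 0" using z1 cA_nz[of m] by auto
    then have False using sphere2_P2[OF s(1)] s(2) by simp
    then show ?thesis ..
  next
    case 4
    then have "s$1 = 0" using z1 cA_nz[of m] by auto
    moreover have "cB t m = 0" "cB (t+1) m = 0" using 4 unfolding cB_def by auto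
    ultimately show ?thesis unfolding inn by simp
  qed
qed

definition Gc :: "(real^4) measure" where "Gc = Nmeas \<alpha> seminorm12 Lam"

lemma AE_notP2:
  assumes "emeasure \<Gamma>2 P2 = 0"
  shows "AE s in \<Gamma>2. s \<notin> P2"
proof -
  have "P2 \<in> sets \<Gamma>2" using P2_sets G_sets by simp
  moreover have "P2 \<in> null_sets \<Gamma>2" using assms calculation by (simp add: null_sets_def)
  ultimately show ?thesis using AE_iff_null_sets by blast
qed

lemma Gc_psi:
  assumes H: "emeasure \<Gamma>2 P2 = 0"
  shows "(\<integral>\<^sup>+ y. ennreal (\<bar>inner u y\<bar> powr \<alpha>) \<partial>Gc) = T u"
proof -
  have "(\<integral>\<^sup>+ y. ennreal (\<bar>inner u y\<bar> powr \<alpha>) \<partial>Gc) =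
        (\<integral>\<^sup>+ x. ennreal (indicator {x. seminorm12 x \<noteq> 0} x * \<bar>inner u x\<bar> powr \<alpha>) \<partial>Lam)"
    unfolding Gc_def by (rule sn.Nmeas_psi[OF Lam_sets \<alpha>(1)])
  also have "\<dots> = (\<integral>\<^sup>+ m. (\<integral>\<^sup>+ s. ennreal (indicator {x. seminorm12 x \<noteq> 0} (Am m s) * \<bar>inner u (Am m s)\<bar> powr \<alpha>) \<partial>\<Gamma>2) \<partial>count_space UNIV)"
    by (rule Lam_nn_integral) (simp add: seminorm12_def)
  also have "\<dots> = (\<integral>\<^sup>+ m. (\<integral>\<^sup>+ s. ennreal (\<bar>inner u (Am m s)\<bar> powr \<alpha>) \<partial>\<Gamma>2) \<partial>count_space UNIV)"
  proof -
    have "(\<integral>\<^sup>+ s. ennreal (indicator {x. seminorm12 x \<noteq> 0} (Am m s) * \<bar>inner u (Am m s)\<bar> powr \<alpha>) \<partial>\<Gamma>2) =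
          (\<integral>\<^sup>+ s. ennreal (\<bar>inner u (Am m s)\<bar> powr \<alpha>) \<partial>\<Gamma>2)" for m
    proof (rule nn_integral_cong_AE)
      show "AE s in \<Gamma>2. ennreal (indicator {x. seminorm12 x \<noteq> 0} (Am m s) * \<bar>inner u (Am m s)\<bar> powr \<alpha>) =
          ennreal (\<bar>inner u (Am m s)\<bar> powr \<alpha>)"
        using AE_sphere AE_notP2[OF H]
      proof eventually_elim
        case (elim s)
        show ?case
        proof (cases "seminorm12 (Am m s) = 0")
          case True
          then show ?thesis using zero_case[OF elim(1,2) True, of u] by simp
        qed simp
      qed
    qed
    then show ?thesis by simp
  qed
  also have "\<dots> = T u"
    unfolding T_def by (rule Lam_nn_integral[symmetric]) simp
  finally show ?thesis .
qed

lemma represents_cyl: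
  assumes H: "emeasure \<Gamma>2 P2 = 0"
  shows "represents_on cyl4 \<alpha> Gc M Xv"
  unfolding represents_on_def sym_borel_measure_on_def
proof (intro conjI allI ballI)
  show "Xv \<in> borel_measurable M" by simp
  show "sets Gc = sets borel" unfolding Gc_def by (rule sn.Nmeas_sets)
  show "cyl4 \<in> sets borel" by (rule cyl4_sets)
  show "emeasure Gc (- cyl4) = 0" unfolding cyl4_def Gc_def by (rule sn.Nmeas_support[OF Lam_sets])
  show "emeasure Gc (uminus ` A) = emeasure Gc A" if "A \<in> sets borel" for A
    using sets_from_symm[OF _ _ that] sn.Nmeas_symm[OF Lam_sets Lam_symm] sn.Nmeas_sets unfolding Gc_def by blast
  show "(\<integral>\<^sup>+ s. ennreal (\<bar>inner u s\<bar> powr \<alpha>) \<partial>Gc) < \<infinity>" for u unfolding Gc_psi[OF H] by (rule T_fin)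
  show "char_fun_vec M Xv u = complex_of_real (exp (- enn2real (\<integral>\<^sup>+ s. ennreal (\<bar>inner u s\<bar> powr \<alpha>) \<partial>Gc)))" for u
    unfolding Gc_psi[OF H] by (rule char_Xv)
qed

lemma only_if_cyl:
  assumes R: "represents_on cyl4 \<alpha> \<Gamma> M Xv"
  shows "emeasure \<Gamma>2 P2 = 0"
proof -
  have Gsets: "sets \<Gamma> = sets borel" and Gsupp: "emeasure \<Gamma> (- cyl4) = 0"
    and Gfin: "\<And>u. (\<integral>\<^sup>+ s. ennreal (\<bar>inner u s\<bar> powr \<alpha>) \<partial>\<Gamma>) < \<infinity>"
    and Gch: "\<And>u. char_fun_vec M Xv u = complex_of_real (exp (- enn2real (\<integral>\<^sup>+ s. ennreal (\<bar>inner u s\<bar> powr \<alpha>) \<partial>\<Gamma>)))"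
    using R unfolding represents_on_def sym_borel_measure_on_def by auto
  have IT: "(\<integral>\<^sup>+ s. ennreal (\<bar>inner u s\<bar> powr \<alpha>) \<partial>\<Gamma>) = T u" for u
  proof -
    have "exp (- enn2real (\<integral>\<^sup>+ s. ennreal (\<bar>inner u s\<bar> powr \<alpha>) \<partial>\<Gamma>)) = exp (- enn2real (T u))"
      using Gch[of u] char_Xv[of u] by simp
    then have eq: "enn2real (\<integral>\<^sup>+ s. ennreal (\<bar>inner u s\<bar> powr \<alpha>) \<partial>\<Gamma>) = enn2real (T u)" by simp
    have a: "ennreal (enn2real (\<integral>\<^sup>+ s. ennreal (\<bar>inner u s\<bar> powr \<alpha>) \<partial>\<Gamma>)) = (\<integral>\<^sup>+ s. ennreal (\<bar>inner u s\<bar> powr \<alpha>) \<partial>\<Gamma>)"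
      using Gfin[of u] by (intro ennreal_enn2real) (simp add: less_top)
    have b: "ennreal (enn2real (T u)) = T u"
      using T_fin[of u] by (intro ennreal_enn2real) (simp add: less_top)
    have "(\<integral>\<^sup>+ s. ennreal (\<bar>inner u s\<bar> powr \<alpha>) \<partial>\<Gamma>) = ennreal (enn2real (\<integral>\<^sup>+ s. ennreal (\<bar>inner u s\<bar> powr \<alpha>) \<partial>\<Gamma>))"
      using a by simp
    also have "\<dots> = ennreal (enn2real (T u))" using eq by simp
    also have "\<dots> = T u" using b .
    finally show ?thesis .
  qed
  have J0: "Jint \<alpha> UNIV \<mu> u = (\<integral>\<^sup>+ s. ennreal (\<bar>inner u s\<bar> powr \<alpha>) \<partial>\<mu>)" for \<mu> :: "(real^4) measure" and u
    unfolding Jint_def by simp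
  define S1 where "S1 = UNIV \<inter> {x::real^4. inner (axis 1 1) x = 0}"
  define S2 where "S2 = S1 \<inter> {x::real^4. inner (axis 2 1) x = 0}"
  have S1: "S1 \<in> sets borel" unfolding S1_def by measurable
  have fin0: "Jint \<alpha> UNIV \<Gamma> u < \<infinity>" "Jint \<alpha> UNIV Lam u < \<infinity>" for u
    using Gfin T_fin unfolding J0 T_def by auto
  have e1: "Jint \<alpha> S1 \<Gamma> w = Jint \<alpha> S1 Lam w" for w
    unfolding S1_def by (rule Jint_uniq_step[OF Gsets Lam_sets _ fin0 _ \<alpha>]) (auto simp: J0 IT T_def)
  have mono: "Jint \<alpha> S1 \<mu> w \<le> Jint \<alpha> UNIV \<mu> w" for \<mu> w
    unfolding Jint_def by (intro nn_integral_mono) (auto simp: indicator_def)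
  have fin1: "Jint \<alpha> S1 \<Gamma> u < \<infinity>" "Jint \<alpha> S1 Lam u < \<infinity>" for u
    using mono fin0 le_less_trans by blast+
  have e2: "Jint \<alpha> S2 \<Gamma> (axis 4 1) = Jint \<alpha> S2 Lam (axis 4 1)"
    unfolding S2_def by (rule Jint_uniq_step[OF Gsets Lam_sets S1 fin1 e1 \<alpha>])
  have z: "Jint \<alpha> S2 \<Gamma> (axis 4 1) = 0"
  proof -
    have "AE x in \<Gamma>. x \<in> cyl4"
    proof -
      have "- cyl4 \<in> sets \<Gamma>" using cyl4_sets Gsets by simp
      moreover have "- cyl4 \<in> null_sets \<Gamma>" using Gsupp calculation by (simp add: null_sets_def)
      ultimately show ?thesis using AE_iff_null_sets[of "- cyl4" \<Gamma>] by simp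
    qed
    then have "Jint \<alpha> S2 \<Gamma> (axis 4 1) = (\<integral>\<^sup>+ x. 0 \<partial>\<Gamma>)"
      unfolding Jint_def
    proof (intro nn_integral_cong_AE, eventually_elim)
      case (elim x)
      then have "x \<notin> S2" unfolding S2_def S1_def cyl4_def seminorm12_def by (auto simp: inner_axis')
      then show ?case by simp
    qed
    then show ?thesis by simp
  qed
  have "emeasure \<Gamma>2 P2 \<le> Jint \<alpha> S2 Lam (axis 4 1)"
  proof -
    have "emeasure \<Gamma>2 P2 = (\<integral>\<^sup>+ s. indicator P2 s \<partial>\<Gamma>2)" using P2_sets G_sets by simp
    also have "\<dots> \<le> (\<integral>\<^sup>+ s. ennreal (indicator S2 (Am (t+1) s) * \<bar>inner (axis 4 1) (Am (t+1) s)\<bar> powr \<alpha>) \<partial>\<Gamma>2)"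
    proof (intro nn_integral_mono)
      fix s assume "s \<in> space \<Gamma>2"
      show "indicator P2 s \<le> ennreal (indicator S2 (Am (t+1) s) * \<bar>inner (axis 4 1) (Am (t+1) s)\<bar> powr \<alpha>)"
      proof (cases "s \<in> P2")
        case True
        then have "s$1 = 0" "\<bar>s$2\<bar> = 1" using P2_elem by auto
        then have "Am (t+1) s \<in> S2" "\<bar>inner (axis 4 1) (Am (t+1) s)\<bar> = 1"
          unfolding S2_def S1_def Am_def cA_def cB_def by (auto simp: inner_axis')
        then show ?thesis using True by simp
      qed simp
    qed
    also have "\<dots> \<le> (\<integral>\<^sup>+ m. (\<integral>\<^sup>+ s. ennreal (indicator S2 (Am m s) * \<bar>inner (axis 4 1) (Am m s)\<bar> powr \<alpha>) \<partial>\<Gamma>2) \<partial>count_space UNIV)"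
      by (rule nn_integral_count_space_ge)
    also have "\<dots> = Jint \<alpha> S2 Lam (axis 4 1)"
      unfolding Jint_def using S1 by (subst Lam_nn_integral) (auto simp: S2_def)
    finally show ?thesis .
  qed
  then show ?thesis using e2 z by simp
qed

end

theorem proposition8:
  fixes M :: "'a measure" and \<alpha> \<rho>1 \<rho>2 :: real
    and \<epsilon> :: "int \<Rightarrow> 'a \<Rightarrow> real^2" and \<Gamma>2 :: "(real^2) measure"
  assumes "prob_space M"
    and "0 < \<alpha>" "\<alpha> < 2"
    and "0 < \<bar>\<rho>1\<bar>" "\<bar>\<rho>1\<bar> < 1" "0 < \<bar>\<rho>2\<bar>" "\<bar>\<rho>2\<bar> < 1"
    and "\<And>t. \<epsilon> t \<in> borel_measurable M"
    and "prob_space.indep_vars M (\<lambda>_. borel) \<epsilon> UNIV"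
    and "\<And>t. distr M borel (\<epsilon> t) = distr M borel (\<epsilon> 0)"
    and "SaS_spectral \<alpha> \<Gamma>2 M (\<epsilon> 0)"
  defines "Xv \<equiv> (\<lambda>t \<omega>. vector [X1_proc \<rho>1 \<epsilon> t \<omega>, X2_proc \<rho>2 \<epsilon> t \<omega>,
                  X1_proc \<rho>1 \<epsilon> (t + 1) \<omega>, X2_proc \<rho>2 \<epsilon> (t + 1) \<omega>] :: real^4)"
  shows "\<forall>t. SaS \<alpha> M (Xv t) \<and>
             (representable_on cyl4 \<alpha> M (Xv t) \<longleftrightarrow>
                emeasure \<Gamma>2 {vector [0, -1], vector [0, 1]} = 0)"
proof
  fix t
  interpret S: SaS_setting M \<alpha> \<rho>1 \<rho>2 \<epsilon> \<Gamma>2 t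
    by (rule SaS_setting.intro) (rule assms)+
  have X: "Xv t = S.Xv" unfolding Xv_def S.Xv_def by (rule ext) simp
  show "SaS \<alpha> M (Xv t) \<and>
             (representable_on cyl4 \<alpha> M (Xv t) \<longleftrightarrow>
                emeasure \<Gamma>2 {vector [0, -1], vector [0, 1]} = 0)"
    unfolding X P2_def[symmetric] representable_on_def
    using S.SaS_Xv S.represents_cyl S.only_if_cyl by blast
qed


end
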